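(* Let $C\subset\mathbb{R}^n$ be a pointed, $n$-dimensional closed convex cone, $\Omega=S^{n-1}\cap\operatorname{int}C^{\circ}$, and $\omega\subset\Omega$ a nonempty compact set. Then there exist $K,L\in\mathcal{K}(C,\omega)$ such that $C_{\gamma^{n}}(K,\cdot)=C_{\gamma^{n}}(L,\cdot)$ but $K\neq L$.
   Context: $C^{\circ}=\{x:\langle x,y\rangle\le 0\ \forall y\in C\}$. A pseudo-cone is a nonempty closed convex set $K$ with $o\notin K$ and $\lambda K\subseteq K$ for $\lambda\ge1$; it is a $C$-pseudo-cone if its recession cone $\{z:K+z\subseteq K\}$ equals $C$. Support function $h_K(x)=\sup_{y\in K}\langle x,y\rangle$ on $C^{\circ}$, $\bar h_K=-h_K$. For $u\in\Omega$, $H_K^-(u)=\{x:\langle x,u\rangle\le h_K(u)\}$. $\mathcal{K}(C,\omega)$ is the set of $C$-pseudo-cones $K$ with $K=C\cap\bigcap_{u\in\omega}H^-_K(u)$. For Borel $\eta\subset\Omega$, $S_{\gamma^n}(K,\eta)=(2\pi)^{-n/2}\int_{\nu_K^{-1}(\eta)}e^{-|x|^2/2}d\mathcal{H}^{n-1}(x)$, where $\nu_K^{-1}(\eta)$ is the set of boundary points of $K$ with an outer unit normal in $\eta$, and $C_{\gamma^n}(K,\eta)=\int_\eta\bar h_K(u)\,dS_{\gamma^n}(K,u)$. *)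

theory Defs
  imports "HOL-Analysis.Analysis"
begin

definition polar_cone :: "'a::euclidean_space set \<Rightarrow> 'a set" where
  "polar_cone C = {x. \<forall>y\<in>C. x \<bullet> y \<le> 0}"

definition pointed_cone :: "'a::euclidean_space set \<Rightarrow> bool" where
  "pointed_cone C \<longleftrightarrow> C \<inter> uminus ` C = {0}"

definition Omega :: "'a::euclidean_space set \<Rightarrow> 'a set" where
  "Omega C = sphere 0 1 \<inter> interior (polar_cone C)"

definition pseudo_cone :: "'a::euclidean_space set \<Rightarrow> bool" where
  "pseudo_cone K \<longleftrightarrow> K \<noteq> {} \<and> closed K \<and> convex K \<and> 0 \<notin> K \<and>
     (\<forall>t::real. t \<ge> 1 \<longrightarrow> (\<forall>x\<in>K. t *\<^sub>R x \<in> K))"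

definition recession_cone :: "'a::euclidean_space set \<Rightarrow> 'a set" where
  "recession_cone K = {z. \<forall>x\<in>K. x + z \<in> K}"

definition C_pseudo_cone :: "'a::euclidean_space set \<Rightarrow> 'a set \<Rightarrow> bool" where
  "C_pseudo_cone C K \<longleftrightarrow> pseudo_cone K \<and> recession_cone K = C"

definition support_fun :: "'a::euclidean_space set \<Rightarrow> 'a \<Rightarrow> real" where
  "support_fun K x = (SUP y\<in>K. x \<bullet> y)"

definition neg_support_fun :: "'a::euclidean_space set \<Rightarrow> 'a \<Rightarrow> real" where
  "neg_support_fun K x = - support_fun K x"

definition halfspace_minus :: "'a::euclidean_space set \<Rightarrow> 'a \<Rightarrow> 'a set" where
  "halfspace_minus K u = {x. x \<bullet> u \<le> support_fun K u}"

definition K_C_omega :: "'a::euclidean_space set \<Rightarrow> 'a set \<Rightarrow> 'a set set" where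
  "K_C_omega C \<omega> = {K. C_pseudo_cone C K \<and> K = C \<inter> (\<Inter>u\<in>\<omega>. halfspace_minus K u)}"

text \<open>Contribution of one covering set to the s-dimensional Hausdorff sum
  (empty sets contribute 0; \<open>t ^ 0 = 1\<close>, so H^0 is counting measure).\<close>
definition hcontent :: "nat \<Rightarrow> 'a::euclidean_space set \<Rightarrow> ennreal" where
  "hcontent s E = (if E = {} then 0 else ennreal (unit_ball_vol (real s) * (diameter E / 2) ^ s))"

definition hausdorff_approx :: "nat \<Rightarrow> real \<Rightarrow> 'a::euclidean_space set \<Rightarrow> ennreal" where
  "hausdorff_approx s \<delta> A =
     (INF E\<in>{E::nat \<Rightarrow> 'a set. A \<subseteq> (\<Union>i. E i) \<and> (\<forall>i. bounded (E i) \<and> diameter (E i) \<le> \<delta>)}.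
        (\<Sum>i. hcontent s (E i)))"

definition hausdorff_outer :: "nat \<Rightarrow> 'a::euclidean_space set \<Rightarrow> ennreal" where
  "hausdorff_outer s A = (SUP \<delta>\<in>{0<..}. hausdorff_approx s \<delta> A)"

definition hausdorff_measure :: "nat \<Rightarrow> 'a::euclidean_space measure" where
  "hausdorff_measure s = measure_of UNIV (lambda_system UNIV (Pow UNIV) (hausdorff_outer s))
                                       (hausdorff_outer s)"

definition outer_unit_normal :: "'a::euclidean_space set \<Rightarrow> 'a \<Rightarrow> 'a \<Rightarrow> bool" where
  "outer_unit_normal K x u \<longleftrightarrow> norm u = 1 \<and> (\<forall>y\<in>K. (y - x) \<bullet> u \<le> 0)"

definition rev_sph_image :: "'a::euclidean_space set \<Rightarrow> 'a set \<Rightarrow> 'a set" where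
  "rev_sph_image K \<eta> = {x \<in> frontier K. \<exists>u\<in>\<eta>. outer_unit_normal K x u}"

definition gauss_surface_area :: "'a::euclidean_space set \<Rightarrow> 'a set \<Rightarrow> ennreal" where
  "gauss_surface_area K \<eta> =
     (\<integral>\<^sup>+ x \<in> rev_sph_image K \<eta>.
        ennreal ((2 * pi) powr (- real DIM('a) / 2) * exp (- (norm x)\<^sup>2 / 2))
      \<partial>hausdorff_measure (DIM('a) - 1))"

definition gauss_surface_measure :: "'a::euclidean_space set \<Rightarrow> 'a set \<Rightarrow> 'a measure" where
  "gauss_surface_measure C K =
     measure_of (Omega C) {\<eta>. \<eta> \<in> sets borel \<and> \<eta> \<subseteq> Omega C} (gauss_surface_area K)"

text \<open>\<open>C_{\<gamma>^n}(K,\<eta>) = \<integral>_\<eta> \<bar>h_K dS_{\<gamma>^n}(K,\<cdot>)\<close> (the integrand is nonnegative on \<open>\<Omega>\<close>).\<close>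
definition gauss_cone_measure :: "'a::euclidean_space set \<Rightarrow> 'a set \<Rightarrow> 'a set \<Rightarrow> ennreal" where
  "gauss_cone_measure C K \<eta> =
     (\<integral>\<^sup>+ u \<in> \<eta>. ennreal (neg_support_fun K u) \<partial>gauss_surface_measure C K)"

end

theory Submission
  imports Defs
begin

abbreviation "HA \<equiv> hausdorff_approx"
abbreviation "HO \<equiv> hausdorff_outer"

definition hcov :: "real \<Rightarrow> 'a::euclidean_space set \<Rightarrow> (nat \<Rightarrow> 'a set) set" where
  "hcov \<delta> A = {E. A \<subseteq> (\<Union>i. E i) \<and> (\<forall>i. bounded (E i) \<and> diameter (E i) \<le> \<delta>)}"

lemma HA_def2: "HA s \<delta> A = (INF E\<in>hcov \<delta> A. (\<Sum>i. hcontent s (E i)))"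
  unfolding hausdorff_approx_def hcov_def by simp

lemma HA_le_cover:
  assumes "A \<subseteq> (\<Union>i. E i)" "\<And>i. bounded (E i)" "\<And>i. diameter (E i) \<le> \<delta>"
  shows "HA s \<delta> A \<le> (\<Sum>i. hcontent s (E i))"
  unfolding HA_def2 by (rule INF_lower) (use assms in \<open>auto simp: hcov_def\<close>)

lemma HA_mono: "A \<subseteq> B \<Longrightarrow> HA s \<delta> A \<le> HA s \<delta> B"
  unfolding HA_def2 by (rule INF_superset_mono) (auto simp: hcov_def)

lemma HA_anti: "\<delta> \<le> \<delta>' \<Longrightarrow> HA s \<delta>' A \<le> HA s \<delta> A"
  unfolding HA_def2 by (rule INF_superset_mono) (auto simp: hcov_def intro: order_trans)

lemma HA_le_HO: "0 < \<delta> \<Longrightarrow> HA s \<delta> A \<le> HO s A"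
  unfolding hausdorff_outer_def by (rule SUP_upper) auto

lemma HO_le: "(\<And>\<delta>. 0 < \<delta> \<Longrightarrow> HA s \<delta> A \<le> c) \<Longrightarrow> HO s A \<le> c"
  unfolding hausdorff_outer_def by (rule SUP_least) auto

lemma HO_mono: "A \<subseteq> B \<Longrightarrow> HO s A \<le> HO s B"
  by (rule HO_le) (meson HA_le_HO HA_mono order_trans)

lemma hcontent_empty[simp]: "hcontent s {} = 0"
  by (simp add: hcontent_def)

lemma HA_empty: "HA s \<delta> {} = 0" if "0 \<le> \<delta>"
  using HA_le_cover[where E="\<lambda>_::nat. {}" and A="{}" and \<delta>=\<delta> and s=s] that by simp

lemma HO_empty[simp]: "HO s {} = 0"
  by (metis HA_empty HO_le le_zero_eq less_imp_le)

lemma HA_countable_subadd: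
  fixes A :: "nat \<Rightarrow> 'a::euclidean_space set"
  shows "HA s \<delta> (\<Union>i. A i) \<le> (\<Sum>i. HA s \<delta> (A i))"
proof (rule ennreal_le_epsilon)
  fix e :: real assume fin: "(\<Sum>i. HA s \<delta> (A i)) < top" and e: "0 < e"
  have each: "HA s \<delta> (A i) < top" for i
    using ennreal_suminf_lessD[OF fin] .
  have "\<exists>E. E \<in> hcov \<delta> (A i) \<and> (\<Sum>j. hcontent s (E j)) < HA s \<delta> (A i) + ennreal (e / 2 ^ Suc i)" for i
  proof -
    have "HA s \<delta> (A i) + 0 < HA s \<delta> (A i) + ennreal (e / 2 ^ Suc i)"
      unfolding ennreal_add_left_cancel_less using each[of i] e by simp
    then have "(INF E\<in>hcov \<delta> (A i). (\<Sum>j. hcontent s (E j))) < HA s \<delta> (A i) + ennreal (e / 2 ^ Suc i)"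
      by (simp add: HA_def2)
    then show ?thesis unfolding INF_less_iff by blast
  qed
  then have "\<forall>i. \<exists>E. E \<in> hcov \<delta> (A i) \<and> (\<Sum>j. hcontent s (E j)) < HA s \<delta> (A i) + ennreal (e / 2 ^ Suc i)"
    by blast
  then obtain E where E0: "\<forall>i. E i \<in> hcov \<delta> (A i) \<and> (\<Sum>j. hcontent s (E i j)) < HA s \<delta> (A i) + ennreal (e / 2 ^ Suc i)"
    using choice[of "\<lambda>i E. E \<in> hcov \<delta> (A i) \<and> (\<Sum>j. hcontent s (E j)) < HA s \<delta> (A i) + ennreal (e / 2 ^ Suc i)"] by blast
  then have E: "\<And>i. E i \<in> hcov \<delta> (A i)"
    "\<And>i. (\<Sum>j. hcontent s (E i j)) < HA s \<delta> (A i) + ennreal (e / 2 ^ Suc i)"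
    by auto
  define F where "F k = (case prod_decode k of (i, j) \<Rightarrow> E i j)" for k
  have cov: "(\<Union>i. A i) \<subseteq> (\<Union>k. F k)"
  proof
    fix x assume "x \<in> (\<Union>i. A i)"
    then obtain i where "x \<in> A i" by auto
    then obtain j where "x \<in> E i j" using E(1)[of i] by (auto simp: hcov_def)
    then have "x \<in> F (prod_encode (i, j))" by (simp add: F_def)
    then show "x \<in> (\<Union>k. F k)" by blast
  qed
  have Fp: "bounded (F k) \<and> diameter (F k) \<le> \<delta>" for k
    using E(1) by (auto simp: F_def hcov_def split: prod.splits)
  have "HA s \<delta> (\<Union>i. A i) \<le> (\<Sum>k. hcontent s (F k))"
    by (rule HA_le_cover[OF cov]) (use Fp in auto)
  also have "\<dots> = (\<Sum>i. \<Sum>j. hcontent s (E i j))"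
    using suminf_ennreal_2dimen[of "\<lambda>i. \<Sum>j. hcontent s (E i j)" "\<lambda>(i,j). hcontent s (E i j)"]
    by (simp add: F_def case_prod_beta)
  also have "\<dots> \<le> (\<Sum>i. HA s \<delta> (A i) + ennreal (e / 2 ^ Suc i))"
    by (intro suminf_le) (use E(2) in \<open>auto intro: less_imp_le\<close>)
  also have "\<dots> = (\<Sum>i. HA s \<delta> (A i)) + (\<Sum>i. ennreal (e / 2 ^ Suc i))"
    by (rule suminf_add[symmetric]) auto
  also have "(\<Sum>i. ennreal (e / 2 ^ Suc i)) = ennreal e"
  proof -
    have "(\<lambda>i. e * (1/2) ^ Suc i) sums (e * 1)"
      by (intro sums_mult power_half_series)
    then have "(\<lambda>i. e / 2 ^ Suc i) sums e" by (simp add: power_divide)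
    then have "summable (\<lambda>i. e / 2 ^ Suc i)" "(\<Sum>i. e / 2 ^ Suc i) = e"
      by (auto simp: sums_iff)
    moreover have "\<And>i. 0 \<le> e / 2 ^ Suc i" using e by auto
    ultimately show ?thesis
      using suminf_ennreal2[of "\<lambda>i. e / 2 ^ Suc i"] by metis
  qed
  finally show "HA s \<delta> (\<Union>i. A i) \<le> (\<Sum>i. HA s \<delta> (A i)) + ennreal e" .
qed

lemma HO_countable_subadd:
  fixes A :: "nat \<Rightarrow> 'a::euclidean_space set"
  shows "HO s (\<Union>i. A i) \<le> (\<Sum>i. HO s (A i))"
proof (rule HO_le)
  fix \<delta> :: real assume "0 < \<delta>"
  have "HA s \<delta> (\<Union>i. A i) \<le> (\<Sum>i. HA s \<delta> (A i))" by (rule HA_countable_subadd)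
  also have "\<dots> \<le> (\<Sum>i. HO s (A i))"
    by (intro suminf_le) (use \<open>0 < \<delta>\<close> HA_le_HO in auto)
  finally show "HA s \<delta> (\<Union>i. A i) \<le> (\<Sum>i. HO s (A i))" .
qed

lemma HO_subadd:
  fixes A B :: "'a::euclidean_space set"
  shows "HO s (A \<union> B) \<le> HO s A + HO s B"
proof -
  define F where "F i = (if i = 0 then A else if i = 1 then B else {})" for i :: nat
  have "A \<union> B = (\<Union>i. F i)" by (auto simp: F_def split: if_splits)
  then have "HO s (A \<union> B) \<le> (\<Sum>i. HO s (F i))" using HO_countable_subadd by metis
  also have "\<dots> = (\<Sum>i\<in>{0,1}. HO s (F i))"
    by (rule suminf_finite) (auto simp: F_def)
  also have "\<dots> = HO s A + HO s B" by (simp add: F_def)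
  finally show ?thesis .
qed

lemma HO_null_lambda:
  fixes N :: "'a::euclidean_space set"
  assumes "HO s N = 0"
  shows "N \<in> lambda_system UNIV (Pow UNIV) (HO s)"
  unfolding lambda_system_def
proof (safe)
  fix X :: "'a set"
  have "HO s (N \<inter> X) = 0" using HO_mono[of "N \<inter> X" N s] assms by simp
  moreover have "HO s ((UNIV - N) \<inter> X) \<le> HO s X" by (rule HO_mono) auto
  moreover have "HO s X \<le> HO s (N \<inter> X) + HO s ((UNIV - N) \<inter> X)"
  proof -
    have "(N \<inter> X) \<union> ((UNIV - N) \<inter> X) = X" by blast
    then show ?thesis using HO_subadd[of s "N \<inter> X" "(UNIV - N) \<inter> X"] by simp
  qed
  ultimately show "HO s (N \<inter> X) + HO s ((UNIV - N) \<inter> X) = HO s X"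
    by (simp add: antisym)
qed auto

lemma HO_ms: "measure_space UNIV (lambda_system UNIV (Pow UNIV) (HO s)) (HO s :: 'a::euclidean_space set \<Rightarrow> ennreal)"
proof -
  interpret sigma_algebra "UNIV :: 'a set" "Pow UNIV" by (rule sigma_algebra_Pow)
  have "outer_measure_space (Pow UNIV) (HO s :: 'a set \<Rightarrow> ennreal)"
    unfolding outer_measure_space_def positive_def increasing_def countably_subadditive_def
    by (auto intro: HO_mono HO_countable_subadd)
  then show ?thesis by (rule caratheodory_lemma)
qed

lemma HM_sets: "sets (hausdorff_measure s :: 'a::euclidean_space measure) = lambda_system UNIV (Pow UNIV) (HO s)"
proof -
  have "sigma_algebra UNIV (lambda_system UNIV (Pow UNIV) (HO s :: 'a set \<Rightarrow> ennreal))"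
    using HO_ms[of s, where 'a='a] unfolding measure_space_def by blast
  then show ?thesis
    unfolding hausdorff_measure_def
    by (subst sets_measure_of) (auto simp: lambda_system_def sigma_algebra.sigma_sets_eq)
qed

lemma HM_emeasure: "A \<in> sets (hausdorff_measure s) \<Longrightarrow> emeasure (hausdorff_measure s) A = HO s (A :: 'a::euclidean_space set)"
  unfolding HM_sets hausdorff_measure_def
  using HO_ms[of s, where 'a='a] sigma_algebra.sigma_sets_eq[of "UNIV::'a set" "lambda_system UNIV (Pow UNIV) (HO s)"]
  by (intro emeasure_measure_of_sigma) (auto simp: measure_space_def)

lemma HM_space[simp]: "space (hausdorff_measure s) = UNIV"
  by (simp add: hausdorff_measure_def lambda_system_def)

lemma bounded_aff: "bounded E \<Longrightarrow> bounded ((\<lambda>x. v + c *\<^sub>R x) ` (E::'a::euclidean_space set))"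
proof -
  assume "bounded E"
  then have "bounded ((\<lambda>x. c *\<^sub>R x) ` E)" by (rule bounded_scaling)
  then have "bounded ((\<lambda>x. v + x) ` ((\<lambda>x. c *\<^sub>R x) ` E))" by (rule bounded_translation)
  then show ?thesis by (simp add: image_image)
qed

lemma diam_aff:
  fixes E :: "'a::euclidean_space set"
  assumes "c > 0" "bounded E"
  shows "diameter ((\<lambda>x. v + c *\<^sub>R x) ` E) \<le> c * diameter E"
proof (cases "E = {}")
  case True then show ?thesis by simp
next
  case False
  show ?thesis
  proof (rule diameter_le)
    show "(\<lambda>x. v + c *\<^sub>R x) ` E \<noteq> {} \<or> 0 \<le> c * diameter E" using False by auto
    fix x y assume "x \<in> (\<lambda>x. v + c *\<^sub>R x) ` E" "y \<in> (\<lambda>x. v + c *\<^sub>R x) ` E"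
    then obtain a b where ab: "a \<in> E" "b \<in> E" "x = v + c *\<^sub>R a" "y = v + c *\<^sub>R b" by auto
    have "norm (x - y) = c * norm (a - b)"
      using assms(1) by (simp add: ab scaleR_diff_right[symmetric])
    also have "\<dots> \<le> c * diameter E"
      using diameter_bounded_bound[OF assms(2) ab(1,2)] assms(1) by (simp add: dist_norm)
    finally show "norm (x - y) \<le> c * diameter E" .
  qed
qed

lemma hcontent_aff:
  fixes E :: "'a::euclidean_space set"
  assumes "c > 0" "bounded E"
  shows "hcontent s ((\<lambda>x. v + c *\<^sub>R x) ` E) \<le> ennreal (c ^ s) * hcontent s E"
proof (cases "E = {}")
  case True then show ?thesis by simp
next
  case False
  have V: "0 \<le> unit_ball_vol (real s)" by (rule unit_ball_vol_nonneg) simp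
  have d0: "0 \<le> diameter ((\<lambda>x. v + c *\<^sub>R x) ` E)" using bounded_aff[OF assms(2), of v c] diameter_ge_0 by blast
  have "(diameter ((\<lambda>x. v + c *\<^sub>R x) ` E) / 2) ^ s \<le> (c * diameter E / 2) ^ s"
    by (intro power_mono divide_right_mono diam_aff assms) (use d0 in auto)
  also have "\<dots> = c ^ s * (diameter E / 2) ^ s" by (simp add: power_mult_distrib[symmetric])
  finally have *: "unit_ball_vol (real s) * (diameter ((\<lambda>x. v + c *\<^sub>R x) ` E) / 2) ^ s
      \<le> c ^ s * (unit_ball_vol (real s) * (diameter E / 2) ^ s)"
    using V by (metis mult.left_commute mult_left_mono)
  have nn: "0 \<le> unit_ball_vol (real s) * (diameter E / 2) ^ s"
    using V diameter_ge_0[OF assms(2)] by simp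
  have "ennreal (unit_ball_vol (real s) * (diameter ((\<lambda>x. v + c *\<^sub>R x) ` E) / 2) ^ s)
      \<le> ennreal (c ^ s * (unit_ball_vol (real s) * (diameter E / 2) ^ s))"
    by (rule ennreal_leI[OF *])
  also have "\<dots> = ennreal (c ^ s) * ennreal (unit_ball_vol (real s) * (diameter E / 2) ^ s)"
    by (rule ennreal_mult) (use assms(1) nn in auto)
  finally show ?thesis using False by (simp add: hcontent_def)
qed

lemma HA_aff:
  fixes A :: "'a::euclidean_space set"
  assumes c: "c > 0"
  shows "HA s (c * \<delta>) ((\<lambda>x. v + c *\<^sub>R x) ` A) \<le> ennreal (c ^ s) * HA s \<delta> A"
proof (rule ennreal_le_epsilon)
  fix e :: real assume fin: "ennreal (c ^ s) * HA s \<delta> A < top" and e: "0 < e"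
  have cs: "0 < c ^ s" using c by simp
  have finA: "HA s \<delta> A \<noteq> top" using fin cs
    by (metis ennreal_mult_eq_top_iff ennreal_eq_0_iff not_less order.strict_implies_not_eq)
  define X where "X = HA s \<delta> A + ennreal (e / c ^ s)"
  have "HA s \<delta> A + 0 < HA s \<delta> A + ennreal (e / c ^ s)"
    unfolding ennreal_add_left_cancel_less using finA e cs by simp
  then have "HA s \<delta> A < X" unfolding X_def by simp
  then obtain E where E: "E \<in> hcov \<delta> A" "(\<Sum>i. hcontent s (E i)) < X"
    unfolding HA_def2 INF_less_iff by auto
  note E = E[unfolded X_def]
  let ?f = "\<lambda>x. v + c *\<^sub>R x"
  have cov: "?f ` A \<subseteq> (\<Union>i. ?f ` E i)" using E(1) unfolding hcov_def by blast
  have "HA s (c * \<delta>) (?f ` A) \<le> (\<Sum>i. hcontent s (?f ` E i))"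
  proof (rule HA_le_cover[OF cov])
    fix i show "bounded (?f ` E i)" using E(1) by (auto simp: hcov_def intro: bounded_aff)
    have "diameter (?f ` E i) \<le> c * diameter (E i)" using E(1) c by (auto simp: hcov_def intro: diam_aff)
    also have "\<dots> \<le> c * \<delta>" using E(1) c by (auto simp: hcov_def)
    finally show "diameter (?f ` E i) \<le> c * \<delta>" .
  qed
  also have "\<dots> \<le> (\<Sum>i. ennreal (c ^ s) * hcontent s (E i))"
    by (intro suminf_le hcontent_aff c) (use E(1) in \<open>auto simp: hcov_def\<close>)
  also have "\<dots> = ennreal (c ^ s) * (\<Sum>i. hcontent s (E i))" by (rule ennreal_suminf_cmult)
  also have "\<dots> \<le> ennreal (c ^ s) * (HA s \<delta> A + ennreal (e / c ^ s))"
    by (rule mult_left_mono) (use E(2) in \<open>auto intro: less_imp_le\<close>)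
  also have "\<dots> = ennreal (c ^ s) * HA s \<delta> A + ennreal e"
  proof -
    have "ennreal (c ^ s) * ennreal (e / c ^ s) = ennreal e"
      using cs e c by (simp add: ennreal_mult[symmetric])
    then show ?thesis by (simp add: distrib_left)
  qed
  finally show "HA s (c * \<delta>) (?f ` A) \<le> ennreal (c ^ s) * HA s \<delta> A + ennreal e" .
qed

lemma HO_aff_le:
  fixes A :: "'a::euclidean_space set"
  assumes c: "c > 0"
  shows "HO s ((\<lambda>x. v + c *\<^sub>R x) ` A) \<le> ennreal (c ^ s) * HO s A"
proof (rule HO_le)
  fix \<delta> :: real assume d: "0 < \<delta>"
  have "HA s \<delta> ((\<lambda>x. v + c *\<^sub>R x) ` A) = HA s (c * (\<delta> / c)) ((\<lambda>x. v + c *\<^sub>R x) ` A)"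
    using c by simp
  also have "\<dots> \<le> ennreal (c ^ s) * HA s (\<delta> / c) A" by (rule HA_aff[OF c])
  also have "\<dots> \<le> ennreal (c ^ s) * HO s A"
    by (intro mult_left_mono HA_le_HO) (use c d in auto)
  finally show "HA s \<delta> ((\<lambda>x. v + c *\<^sub>R x) ` A) \<le> ennreal (c ^ s) * HO s A" .
qed

lemma aff_inv_image:
  fixes A :: "'a::euclidean_space set"
  assumes c: "c > 0"
  shows "(\<lambda>y. (- (1/c) *\<^sub>R v) + (1/c) *\<^sub>R y) ` ((\<lambda>x. v + c *\<^sub>R x) ` A) = A"
  using c by (auto simp: image_image algebra_simps)

lemma aff_inj: "c > 0 \<Longrightarrow> inj (\<lambda>x::'a::euclidean_space. v + c *\<^sub>R x)"
  by (auto simp: inj_def)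

lemma aff_surj_image:
  fixes X :: "'a::euclidean_space set"
  assumes c: "c > 0"
  shows "(\<lambda>x. v + c *\<^sub>R x) ` ((\<lambda>y. (- (1/c) *\<^sub>R v) + (1/c) *\<^sub>R y) ` X) = X"
  using c by (auto simp: image_image algebra_simps)

lemma HO_aff:
  fixes A :: "'a::euclidean_space set"
  assumes c: "c > 0"
  shows "HO s ((\<lambda>x. v + c *\<^sub>R x) ` A) = ennreal (c ^ s) * HO s A"
proof (rule antisym)
  show "HO s ((\<lambda>x. v + c *\<^sub>R x) ` A) \<le> ennreal (c ^ s) * HO s A" by (rule HO_aff_le[OF c])
  have ic: "1/c > 0" using c by simp
  have "HO s A \<le> ennreal ((1/c) ^ s) * HO s ((\<lambda>x. v + c *\<^sub>R x) ` A)"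
    using HO_aff_le[OF ic, of s "- (1/c) *\<^sub>R v" "(\<lambda>x. v + c *\<^sub>R x) ` A"] aff_inv_image[OF c, of v A] by simp
  then have "ennreal (c ^ s) * HO s A \<le> ennreal (c ^ s) * (ennreal ((1/c) ^ s) * HO s ((\<lambda>x. v + c *\<^sub>R x) ` A))"
    by (rule mult_left_mono) simp
  also have "\<dots> = HO s ((\<lambda>x. v + c *\<^sub>R x) ` A)"
    using c by (simp add: mult.assoc[symmetric] ennreal_mult[symmetric] power_mult_distrib[symmetric])
  finally show "ennreal (c ^ s) * HO s A \<le> HO s ((\<lambda>x. v + c *\<^sub>R x) ` A)" .
qed

lemma lambda_aff:
  fixes B :: "'a::euclidean_space set"
  assumes c: "c > 0" and B: "B \<in> lambda_system UNIV (Pow UNIV) (HO s)"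
  shows "(\<lambda>x. v + c *\<^sub>R x) ` B \<in> lambda_system UNIV (Pow UNIV) (HO s)"
  unfolding lambda_system_def
proof (safe)
  fix X :: "'a set"
  let ?f = "\<lambda>x. v + c *\<^sub>R x"
  define Y where "Y = (\<lambda>y. (- (1/c) *\<^sub>R v) + (1/c) *\<^sub>R y) ` X"
  have XY: "X = ?f ` Y" unfolding Y_def using aff_surj_image[OF c, of v X] by simp
  have inj: "inj ?f" by (rule aff_inj[OF c])
  have 1: "?f ` B \<inter> X = ?f ` (B \<inter> Y)" unfolding XY using image_Int[OF inj] by simp
  have 2: "(UNIV - ?f ` B) \<inter> X = ?f ` ((UNIV - B) \<inter> Y)" unfolding XY using inj
    by (auto simp: inj_def)
  have BY: "HO s (B \<inter> Y) + HO s ((UNIV - B) \<inter> Y) = HO s Y" using B by (auto simp: lambda_system_def)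
  have "HO s (?f ` B \<inter> X) + HO s ((UNIV - ?f ` B) \<inter> X) = HO s (?f ` (B \<inter> Y)) + HO s (?f ` ((UNIV - B) \<inter> Y))"
    using 1 2 by simp
  also have "\<dots> = ennreal (c ^ s) * (HO s (B \<inter> Y) + HO s ((UNIV - B) \<inter> Y))"
    by (simp add: HO_aff[OF c] distrib_left)
  also have "\<dots> = HO s (?f ` Y)" using BY HO_aff[OF c, of s v Y] by simp
  finally show "HO s (?f ` B \<inter> X) + HO s ((UNIV - ?f ` B) \<inter> X) = HO s X"
    using XY by simp
qed auto

lemma HM_aff:
  fixes B :: "'a::euclidean_space set"
  assumes c: "c > 0" and B: "B \<in> sets (hausdorff_measure s)"
  shows "(\<lambda>x. v + c *\<^sub>R x) ` B \<in> sets (hausdorff_measure s)"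
    "emeasure (hausdorff_measure s) ((\<lambda>x. v + c *\<^sub>R x) ` B) = ennreal (c ^ s) * emeasure (hausdorff_measure s) B"
proof -
  show 1: "(\<lambda>x. v + c *\<^sub>R x) ` B \<in> sets (hausdorff_measure s)"
    using lambda_aff[OF c] B unfolding HM_sets by blast
  show "emeasure (hausdorff_measure s) ((\<lambda>x. v + c *\<^sub>R x) ` B) = ennreal (c ^ s) * emeasure (hausdorff_measure s) B"
    using HM_emeasure[OF 1] HM_emeasure[OF B] HO_aff[OF c] by simp
qed

lemma HA_sep:
  fixes A B :: "'a::euclidean_space set"
  assumes sep: "\<And>a b. a \<in> A \<Longrightarrow> b \<in> B \<Longrightarrow> r \<le> dist a b" and d: "0 \<le> \<delta>" "\<delta> < r"
  shows "HA s \<delta> A + HA s \<delta> B \<le> HA s \<delta> (A \<union> B)"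
proof -
  have "HA s \<delta> A + HA s \<delta> B \<le> (INF E\<in>hcov \<delta> (A \<union> B). (\<Sum>i. hcontent s (E i)))"
  proof (rule INF_greatest)
    fix E assume E: "E \<in> hcov \<delta> (A \<union> B)"
    define EA where "EA i = (if E i \<inter> A = {} then {} else E i)" for i
    define EB where "EB i = (if E i \<inter> B = {} then {} else E i)" for i
    have Eb: "bounded (E i)" "diameter (E i) \<le> \<delta>" for i using E by (auto simp: hcov_def)
    have "HA s \<delta> A \<le> (\<Sum>i. hcontent s (EA i))"
    proof (rule HA_le_cover)
      show "A \<subseteq> (\<Union>i. EA i)"
      proof
        fix x assume "x \<in> A"
        then obtain i where "x \<in> E i" using E by (auto simp: hcov_def)
        then show "x \<in> (\<Union>i. EA i)" using \<open>x \<in> A\<close> by (auto simp: EA_def)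
      qed
    qed (use Eb d in \<open>auto simp: EA_def\<close>)
    moreover have "HA s \<delta> B \<le> (\<Sum>i. hcontent s (EB i))"
    proof (rule HA_le_cover)
      show "B \<subseteq> (\<Union>i. EB i)"
      proof
        fix x assume "x \<in> B"
        then obtain i where "x \<in> E i" using E by (auto simp: hcov_def)
        then show "x \<in> (\<Union>i. EB i)" using \<open>x \<in> B\<close> by (auto simp: EB_def)
      qed
    qed (use Eb d in \<open>auto simp: EB_def\<close>)
    moreover have "hcontent s (EA i) + hcontent s (EB i) \<le> hcontent s (E i)" for i
    proof -
      have "\<not> (E i \<inter> A \<noteq> {} \<and> E i \<inter> B \<noteq> {})"
      proof
        assume "E i \<inter> A \<noteq> {} \<and> E i \<inter> B \<noteq> {}"
        then obtain a b where ab: "a \<in> E i" "a \<in> A" "b \<in> E i" "b \<in> B" by auto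
        have "dist a b \<le> diameter (E i)" by (rule diameter_bounded_bound[OF Eb(1) ab(1,3)])
        then show False using sep[OF ab(2,4)] Eb(2)[of i] d by linarith
      qed
      then show ?thesis by (auto simp: EA_def EB_def)
    qed
    then have "(\<Sum>i. hcontent s (EA i)) + (\<Sum>i. hcontent s (EB i)) \<le> (\<Sum>i. hcontent s (E i))"
      by (subst suminf_add) (auto intro: suminf_le)
    ultimately show "HA s \<delta> A + HA s \<delta> B \<le> (\<Sum>i. hcontent s (E i))"
      by (meson add_mono order_trans)
  qed
  then show ?thesis by (simp add: HA_def2)
qed

lemma HO_sep:
  fixes A B :: "'a::euclidean_space set"
  assumes sep: "\<And>a b. a \<in> A \<Longrightarrow> b \<in> B \<Longrightarrow> r \<le> dist a b" and r: "0 < r"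
  shows "HO s (A \<union> B) = HO s A + HO s B"
proof (rule antisym)
  show "HO s (A \<union> B) \<le> HO s A + HO s B" by (rule HO_subadd)
  have key: "HA s d1 A + HA s d2 B \<le> HO s (A \<union> B)" if "0 < d1" "0 < d2" for d1 d2
  proof -
    define d where "d = min (min d1 d2) (r / 2)"
    have d: "0 < d" "d \<le> d1" "d \<le> d2" "d < r" using that r by (auto simp: d_def)
    have "HA s d1 A + HA s d2 B \<le> HA s d A + HA s d B"
      by (intro add_mono HA_anti d)
    also have "\<dots> \<le> HA s d (A \<union> B)" by (rule HA_sep[OF sep]) (use d in auto)
    also have "\<dots> \<le> HO s (A \<union> B)" by (rule HA_le_HO[OF d(1)])
    finally show ?thesis .
  qed
  have "HO s A + HO s B = (SUP d2\<in>{0<..}. (SUP d1\<in>{0<..}. HA s d1 A + HA s d2 B))"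
    unfolding hausdorff_outer_def
    by (simp add: ennreal_SUP_add_left[symmetric] ennreal_SUP_add_right)
  also have "\<dots> \<le> HO s (A \<union> B)"
    by (intro SUP_least) (use key in auto)
  finally show "HO s A + HO s B \<le> HO s (A \<union> B)" .
qed

lemma sum_even_odd: "(\<Sum>j<2*m. f j) = (\<Sum>i<m. f (2*i) + f (2*i+1))" for f :: "nat \<Rightarrow> ennreal"
  by (induction m) (auto simp: algebra_simps)

lemma closed_lambda:
  fixes F :: "'a::euclidean_space set"
  assumes cF: "closed F"
  shows "F \<in> lambda_system UNIV (Pow UNIV) (HO s)"
  unfolding lambda_system_def
proof (safe)
  fix X :: "'a set"
  have ge: "HO s X \<le> HO s (F \<inter> X) + HO s ((UNIV - F) \<inter> X)"
  proof -
    have "(F \<inter> X) \<union> ((UNIV - F) \<inter> X) = X" by blast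
    then show ?thesis using HO_subadd[of s "F \<inter> X" "(UNIV - F) \<inter> X"] by simp
  qed
  have le: "HO s (F \<inter> X) + HO s ((UNIV - F) \<inter> X) \<le> HO s X"
  proof (cases "F = {}")
    case True then show ?thesis by simp
  next
    case Fne: False
    show ?thesis
    proof (cases "HO s X = top")
      case True then show ?thesis by simp
    next
      case fin: False
      define d where "d x = infdist x F" for x
      define XX where "XX k = {x \<in> X. x \<notin> F \<and> 1 / real (Suc k) \<le> d x}" for k
      define R where "R j = XX (Suc j) - XX j" for j
      have XXmono: "XX k \<subseteq> XX k'" if "k \<le> k'" for k k'
      proof
        fix x assume "x \<in> XX k"
        moreover have "1 / real (Suc k') \<le> 1 / real (Suc k)" using that by (simp add: frac_le)
        ultimately show "x \<in> XX k'" unfolding XX_def by auto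
      qed
      have a: "HO s (F \<inter> X) + HO s (XX k) \<le> HO s X" for k
      proof -
        have "HO s (F \<inter> X) + HO s (XX k) = HO s ((F \<inter> X) \<union> XX k)"
        proof (rule HO_sep[symmetric])
          fix a b assume "a \<in> F \<inter> X" "b \<in> XX k"
          then have "1 / real (Suc k) \<le> d b" "d b \<le> dist b a"
            unfolding XX_def d_def by (auto intro: infdist_le)
          then show "1 / real (Suc k) \<le> dist a b" by (simp add: dist_commute)
        qed simp
        also have "\<dots> \<le> HO s X" by (rule HO_mono) (auto simp: XX_def)
        finally show ?thesis .
      qed
      have Rmem: "x \<in> X" "x \<notin> F" "1 / real (Suc (Suc j)) \<le> d x" "d x < 1 / real (Suc j)" if "x \<in> R j" for x j
        using that unfolding R_def XX_def by auto
      have sepR: "HO s (\<Union>i<m. R (2*i+p)) + HO s (R (2*m+p)) = HO s ((\<Union>i<m. R (2*i+p)) \<union> R (2*m+p))" for m p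
      proof (cases m)
        case 0 then show ?thesis by simp
      next
        case (Suc m')
        define r where "r = 1 / real (2*m+p) - 1 / real (2*m+p+1)"
        have r: "0 < r" unfolding r_def using Suc by (auto simp: frac_less2)
        show ?thesis
        proof (rule HO_sep[symmetric, OF _ r])
          fix a b assume "a \<in> (\<Union>i<m. R (2*i+p))" "b \<in> R (2*m+p)"
          then obtain i where i: "i < m" "a \<in> R (2*i+p)" by auto
          have "1 / real (2*m+p) \<le> 1 / real (Suc (Suc (2*i+p)))"
            using i(1) by (intro frac_le) auto
          also have "\<dots> \<le> d a" using Rmem(3)[OF i(2)] .
          finally have da: "1 / real (2*m+p) \<le> d a" .
          have db: "d b < 1 / real (2*m+p+1)" using Rmem(4)[OF \<open>b \<in> R (2*m+p)\<close>] by simp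
          have "d a \<le> d b + dist a b" unfolding d_def by (rule infdist_triangle)
          then show "r \<le> dist a b" using da db unfolding r_def by linarith
        qed
      qed
      have partial: "(\<Sum>i<m. HO s (R (2*i+p))) \<le> HO s (\<Union>i<m. R (2*i+p))" for m p
      proof (induction m)
        case 0 then show ?case by simp
      next
        case (Suc m)
        have "(\<Sum>i<Suc m. HO s (R (2*i+p))) = (\<Sum>i<m. HO s (R (2*i+p))) + HO s (R (2*m+p))" by simp
        also have "\<dots> \<le> HO s (\<Union>i<m. R (2*i+p)) + HO s (R (2*m+p))" using Suc by (rule add_right_mono)
        also have "\<dots> = HO s ((\<Union>i<m. R (2*i+p)) \<union> R (2*m+p))" by (rule sepR)
        also have "(\<Union>i<m. R (2*i+p)) \<union> R (2*m+p) = (\<Union>i<Suc m. R (2*i+p))"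
          by (auto simp: lessThan_Suc)
        finally show ?case .
      qed
      have RX: "R j \<subseteq> X" for j unfolding R_def XX_def by auto
      have partial2: "(\<Sum>i<m. HO s (R (2*i+p))) \<le> HO s X" for m p
        using partial[where m=m and p=p] HO_mono[of "\<Union>i<m. R (2*i+p)" X s] RX by (meson UN_least order_trans)
      have sumR: "(\<Sum>j. HO s (R j)) \<le> 2 * HO s X"
        unfolding suminf_eq_SUP
      proof (rule SUP_least)
        fix n
        have "(\<Sum>j<n. HO s (R j)) \<le> (\<Sum>j<2*n. HO s (R j))" by (rule sum_mono2) auto
        also have "\<dots> = (\<Sum>i<n. HO s (R (2*i+0)) + HO s (R (2*i+1)))" by (simp add: sum_even_odd)
        also have "\<dots> = (\<Sum>i<n. HO s (R (2*i+0))) + (\<Sum>i<n. HO s (R (2*i+1)))" by (rule sum.distrib)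
        also have "\<dots> \<le> HO s X + HO s X" by (intro add_mono partial2)
        finally show "(\<Sum>j<n. HO s (R j)) \<le> 2 * HO s X" by (simp add: mult_2)
      qed
      have sumfin: "(\<Sum>j. HO s (R j)) \<noteq> top"
      proof
        assume "(\<Sum>j. HO s (R j)) = top"
        then have "2 * HO s X = top" using sumR by (simp add: top_unique)
        then show False using fin by (simp add: ennreal_mult_eq_top_iff)
      qed
      have cover: "X - F \<subseteq> XX k \<union> (\<Union>j. R (j + k))" for k
      proof
        fix x assume x: "x \<in> X - F"
        have dpos: "0 < d x" unfolding d_def using x cF Fne by (auto intro: infdist_pos_not_in_closed)
        obtain n where n: "1 / real (Suc n) < d x"
          using dpos by (metis reals_Archimedean Suc_eq_plus1 of_nat_Suc inverse_eq_divide)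
        let ?P = "\<lambda>n. 1 / real (Suc n) \<le> d x"
        have Pn: "?P n" using n by simp
        show "x \<in> XX k \<union> (\<Union>j. R (j + k))"
        proof (cases "x \<in> XX k")
          case True then show ?thesis by simp
        next
          case False
          define m where "m = (LEAST n. ?P n)"
          have Pm: "?P m" unfolding m_def by (rule LeastI[where P="?P", OF Pn])
          have xm: "x \<in> XX m" using Pm x unfolding XX_def by auto
          have "k < m"
          proof (rule ccontr)
            assume "\<not> k < m"
            then have "XX m \<subseteq> XX k" by (intro XXmono) simp
            then show False using xm False by auto
          qed
          then obtain j where j: "m = Suc j" by (cases m) auto
          have "\<not> ?P j"
          proof
            assume "?P j"
            then have "m \<le> j" using Least_le[where P="?P", OF \<open>?P j\<close>] m_def by simp
            then show False using j by simp
          qed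
          then have "x \<notin> XX j" unfolding XX_def by auto
          then have "x \<in> R j" using xm j unfolding R_def by auto
          moreover have "j = (j - k) + k" using \<open>k < m\<close> j by simp
          ultimately show ?thesis by (metis UN_I UNIV_I UnI2)
        qed
      qed
      have d_bound: "HO s (X - F) \<le> HO s (XX k) + (\<Sum>j. HO s (R (j + k)))" for k
      proof -
        have "HO s (X - F) \<le> HO s (XX k \<union> (\<Union>j. R (j + k)))" by (rule HO_mono[OF cover])
        also have "\<dots> \<le> HO s (XX k) + HO s (\<Union>j. R (j + k))" by (rule HO_subadd)
        also have "\<dots> \<le> HO s (XX k) + (\<Sum>j. HO s (R (j + k)))"
          by (intro add_left_mono HO_countable_subadd)
        finally show ?thesis .
      qed
      have tail: "\<exists>k. (\<Sum>j. HO s (R (j + k))) \<le> ennreal e" if e: "0 < e" for e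
      proof -
        define g where "g j = enn2real (HO s (R j))" for j
        have Rfin: "HO s (R j) \<noteq> top" for j
          using sumfin ennreal_suminf_lessD[of "\<lambda>j. HO s (R j)" top] by (simp add: top.not_eq_extremum)
        have g: "HO s (R j) = ennreal (g j)" for j unfolding g_def using Rfin[of j] by (simp add: ennreal_enn2real_if)
        have g0: "0 \<le> g j" for j by (simp add: g_def)
        have sg: "summable g" by (rule summable_suminf_not_top) (use g0 sumfin g in auto)
        obtain N where N: "\<forall>n\<ge>N. norm (\<Sum>i. g (i + n)) < e" using suminf_exist_split[OF e sg] by blast
        have "(\<Sum>j. HO s (R (j + N))) = ennreal (\<Sum>j. g (j + N))"
          unfolding g by (rule suminf_ennreal2) (use g0 sg in auto)
        also have "\<dots> \<le> ennreal e" using N by (intro ennreal_leI) auto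
        finally show ?thesis by blast
      qed
      show ?thesis
      proof (rule ennreal_le_epsilon)
        fix e :: real assume "0 < e"
        then obtain k where k: "(\<Sum>j. HO s (R (j + k))) \<le> ennreal e" using tail by blast
        have "(UNIV - F) \<inter> X = X - F" by blast
        then have "HO s (F \<inter> X) + HO s ((UNIV - F) \<inter> X) \<le> HO s (F \<inter> X) + (HO s (XX k) + ennreal e)"
          using d_bound[of k] k by (metis add_left_mono order_trans)
        also have "\<dots> = (HO s (F \<inter> X) + HO s (XX k)) + ennreal e" by (simp add: add.assoc)
        also have "\<dots> \<le> HO s X + ennreal e" using a[of k] by (rule add_right_mono)
        finally show "HO s (F \<inter> X) + HO s ((UNIV - F) \<inter> X) \<le> HO s X + ennreal e" .
      qed
    qed
  qed
  show "HO s (F \<inter> X) + HO s ((UNIV - F) \<inter> X) = HO s X" using ge le by (rule antisym[rotated])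
qed auto

lemma borel_sub_HM: "sets borel \<subseteq> sets (hausdorff_measure s :: 'a::euclidean_space measure)"
proof -
  have "sets (borel :: 'a measure) = sigma_sets UNIV {S. closed S}"
    by (simp add: borel_eq_closed)
  also have "\<dots> \<subseteq> sets (hausdorff_measure s :: 'a measure)"
  proof (rule sigma_algebra.sigma_sets_subset)
    show "sigma_algebra UNIV (sets (hausdorff_measure s :: 'a measure))"
      using sets.sigma_algebra_axioms[of "hausdorff_measure s :: 'a measure"] by simp
    show "{S. closed S} \<subseteq> sets (hausdorff_measure s :: 'a measure)"
      unfolding HM_sets using closed_lambda by blast
  qed
  finally show ?thesis .
qed

lemma borel_meas_HM: "f \<in> borel_measurable borel \<Longrightarrow> f \<in> borel_measurable (hausdorff_measure s :: 'a::euclidean_space measure)"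
  by (rule borel_measurable_subalgebra[OF borel_sub_HM]) auto

lemma HA_finite_cover:
  fixes A :: "'a::euclidean_space set" and Q :: "'i \<Rightarrow> 'a set"
  assumes I: "finite I" and cov: "A \<subseteq> (\<Union>k\<in>I. Q k)"
    and Qb: "\<And>k. k \<in> I \<Longrightarrow> bounded (Q k)" and Qd: "\<And>k. k \<in> I \<Longrightarrow> diameter (Q k) \<le> \<delta>"
    and d: "0 \<le> \<delta>"
  shows "HA s \<delta> A \<le> (\<Sum>k\<in>I. hcontent s (Q k))"
proof -
  obtain g where g: "bij_betw g {0..<card I} I" using ex_bij_betw_nat_finite[OF I] by blast
  define E where "E i = (if i < card I then Q (g i) else {})" for i
  have "A \<subseteq> (\<Union>i. E i)"
  proof
    fix x assume "x \<in> A"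
    then obtain k where k: "k \<in> I" "x \<in> Q k" using cov by auto
    then obtain i where "i \<in> {0..<card I}" "g i = k" using g by (metis bij_betw_def imageE)
    then show "x \<in> (\<Union>i. E i)" using k by (auto simp: E_def)
  qed
  then have "HA s \<delta> A \<le> (\<Sum>i. hcontent s (E i))"
  proof (rule HA_le_cover)
    fix i
    have gi: "i < card I \<Longrightarrow> g i \<in> I" using g by (auto simp: bij_betw_def)
    show "bounded (E i)" using Qb gi by (auto simp: E_def)
    show "diameter (E i) \<le> \<delta>" using Qd gi d by (auto simp: E_def)
  qed
  also have "(\<Sum>i. hcontent s (E i)) = (\<Sum>i\<in>{0..<card I}. hcontent s (E i))"
    by (rule suminf_finite) (auto simp: E_def)
  also have "\<dots> = (\<Sum>i\<in>{0..<card I}. hcontent s (Q (g i)))" by (simp add: E_def)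
  also have "\<dots> = (\<Sum>k\<in>I. hcontent s (Q k))" by (rule sum.reindex_bij_betw[OF g])
  finally show ?thesis .
qed

lemma hyper_norm_bound:
  fixes u z :: "'a::euclidean_space"
  assumes j: "j \<in> Basis" "u \<bullet> j \<noteq> 0" and z: "z \<bullet> u = 0" and h0: "0 \<le> h"
    and zb: "\<And>b. b \<in> Basis - {j} \<Longrightarrow> \<bar>z \<bullet> b\<bar> \<le> h"
  shows "norm z \<le> h * ((\<Sum>b\<in>Basis - {j}. \<bar>u \<bullet> b\<bar>) / \<bar>u \<bullet> j\<bar> + real DIM('a))"
proof -
  let ?B = "Basis - {j} :: 'a set"
  let ?S = "\<Sum>b\<in>?B. \<bar>u \<bullet> b\<bar>"
  have "0 = (\<Sum>b\<in>Basis. (z \<bullet> b) * (u \<bullet> b))" using z by (simp add: euclidean_inner[of z u])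
  also have "\<dots> = (z \<bullet> j) * (u \<bullet> j) + (\<Sum>b\<in>?B. (z \<bullet> b) * (u \<bullet> b))"
    by (rule sum.remove[OF finite_Basis j(1)])
  finally have eq: "(z \<bullet> j) * (u \<bullet> j) = - (\<Sum>b\<in>?B. (z \<bullet> b) * (u \<bullet> b))" by linarith
  have "\<bar>z \<bullet> j\<bar> * \<bar>u \<bullet> j\<bar> = \<bar>\<Sum>b\<in>?B. (z \<bullet> b) * (u \<bullet> b)\<bar>"
    using eq by (metis abs_minus_cancel abs_mult)
  also have "\<dots> \<le> (\<Sum>b\<in>?B. \<bar>z \<bullet> b\<bar> * \<bar>u \<bullet> b\<bar>)"
    by (rule order_trans[OF sum_abs]) (simp add: abs_mult)
  also have "\<dots> \<le> (\<Sum>b\<in>?B. h * \<bar>u \<bullet> b\<bar>)"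
    by (intro sum_mono mult_right_mono zb) auto
  also have "\<dots> = h * ?S" by (simp add: sum_distrib_left)
  finally have zj: "\<bar>z \<bullet> j\<bar> \<le> h * ?S / \<bar>u \<bullet> j\<bar>"
    using j(2) by (simp add: field_simps)
  have "norm z \<le> (\<Sum>b\<in>Basis. \<bar>z \<bullet> b\<bar>)" by (rule norm_le_l1)
  also have "\<dots> = \<bar>z \<bullet> j\<bar> + (\<Sum>b\<in>?B. \<bar>z \<bullet> b\<bar>)"
    by (rule sum.remove[OF finite_Basis j(1)])
  also have "\<dots> \<le> h * ?S / \<bar>u \<bullet> j\<bar> + (\<Sum>b\<in>?B. h)"
    by (intro add_mono zj sum_mono zb) auto
  also have "(\<Sum>b\<in>?B. h) = h * real (card ?B)" by simp
  also have "\<dots> \<le> h * real DIM('a)"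
    by (intro mult_left_mono h0) (simp add: card_Diff_subset j(1))
  finally show ?thesis by (simp add: distrib_left)
qed

lemma exists_basis_nonzero:
  fixes u :: "'a::euclidean_space"
  assumes "u \<noteq> 0"
  obtains j where "j \<in> Basis" "u \<bullet> j \<noteq> 0"
  using assms euclidean_all_zero_iff by blast

lemma floor_bin:
  fixes t :: real
  assumes "0 \<le> t" "t \<le> real N" "1 \<le> N"
  shows "real (min (N - 1) (nat \<lfloor>t\<rfloor>)) \<le> t" "t \<le> real (min (N - 1) (nat \<lfloor>t\<rfloor>)) + 1"
    "min (N - 1) (nat \<lfloor>t\<rfloor>) < N"
proof -
  have f1: "real (nat \<lfloor>t\<rfloor>) \<le> t" using assms(1) by linarith
  have f2: "t < real (nat \<lfloor>t\<rfloor>) + 1" using assms(1) by linarith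
  show "real (min (N - 1) (nat \<lfloor>t\<rfloor>)) \<le> t" using f1 by (simp add: min_def)
  show "t \<le> real (min (N - 1) (nat \<lfloor>t\<rfloor>)) + 1"
  proof (cases "nat \<lfloor>t\<rfloor> \<le> N - 1")
    case True then show ?thesis using f2 by (simp add: min_def)
  next
    case False then show ?thesis using assms(2,3) by (simp add: min_def of_nat_diff)
  qed
  show "min (N - 1) (nat \<lfloor>t\<rfloor>) < N" using assms(3) by simp
qed

lemma HO_hyper_finite:
  fixes u :: "'a::euclidean_space"
  assumes u: "u \<noteq> 0"
  shows "HO (DIM('a) - 1) ({x. x \<bullet> u = a} \<inter> cball 0 R) \<noteq> top"
proof -
  obtain j where j: "j \<in> Basis" "u \<bullet> j \<noteq> 0" using exists_basis_nonzero[OF u] by blast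
  define B where "B = Basis - {j :: 'a}"
  define s where "s = DIM('a) - 1"
  have cardB: "card B = s" unfolding B_def s_def using j(1) by (simp add: card_Diff_subset)
  define R' where "R' = max R 1"
  have R': "0 < R'" "R \<le> R'" by (auto simp: R'_def)
  define L where "L = (\<Sum>b\<in>B. \<bar>u \<bullet> b\<bar>) / \<bar>u \<bullet> j\<bar> + real DIM('a)"
  have L: "0 < L" unfolding L_def by (intro add_nonneg_pos divide_nonneg_nonneg) (auto intro: sum_nonneg)
  define V where "V = unit_ball_vol (real s)"
  have V: "0 \<le> V" unfolding V_def by (rule unit_ball_vol_nonneg) simp
  define P where "P = {x. x \<bullet> u = a} \<inter> cball 0 R'"
  have main: "HA s \<delta> P \<le> ennreal (V * (R' * L) ^ s)" if d: "0 < \<delta>" for \<delta>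
  proof -
    define N where "N = nat \<lceil>2 * R' * L / \<delta>\<rceil> + 1"
    have N1: "1 \<le> N" by (simp add: N_def)
    have NN: "2 * R' * L / \<delta> \<le> real N" unfolding N_def by linarith
    define h where "h = 2 * R' / real N"
    have h0: "0 < h" using R' N1 by (simp add: h_def)
    have hL: "h * L \<le> \<delta>"
    proof -
      have "2 * R' * L \<le> real N * \<delta>" using NN d by (simp add: field_simps)
      then show ?thesis using N1 unfolding h_def by (simp add: field_simps)
    qed
    define I where "I = PiE B (\<lambda>_. {..<N})"
    have I: "finite I" unfolding I_def B_def by (intro finite_PiE) auto
    have cardI: "card I = N ^ s" unfolding I_def using cardB by (simp add: card_PiE B_def)
    define Q where "Q k = {x. x \<bullet> u = a \<and> (\<forall>b\<in>B. - R' + h * real (k b) \<le> x \<bullet> b \<and> x \<bullet> b \<le> - R' + h * (real (k b) + 1))}" for k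
    have Qn: "norm (x - y) \<le> h * L" if "x \<in> Q k" "y \<in> Q k" for x y k
      unfolding L_def B_def
    proof (rule hyper_norm_bound[OF j])
      show "(x - y) \<bullet> u = 0" using that by (auto simp: Q_def inner_diff_left)
      show "0 \<le> h" using h0 by simp
      fix b assume "b \<in> Basis - {j}"
      then have "b \<in> B" by (simp add: B_def)
      then have xb: "- R' + h * real (k b) \<le> x \<bullet> b" "x \<bullet> b \<le> - R' + h * (real (k b) + 1)"
        and yb: "- R' + h * real (k b) \<le> y \<bullet> b" "y \<bullet> b \<le> - R' + h * (real (k b) + 1)"
        using that by (auto simp: Q_def)
      show "\<bar>(x - y) \<bullet> b\<bar> \<le> h" using xb yb by (simp add: inner_diff_left abs_le_iff algebra_simps)
    qed
    have Qb: "bounded (Q k)" for k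
    proof (cases "Q k = {}")
      case True then show ?thesis by simp
    next
      case False
      then obtain y0 where "y0 \<in> Q k" by auto
      then have "Q k \<subseteq> cball y0 (h * L)" using Qn by (auto simp: dist_norm norm_minus_commute)
      then show ?thesis by (rule bounded_subset[OF bounded_cball])
    qed
    have Qd: "diameter (Q k) \<le> h * L" for k
      by (rule diameter_le) (use Qn h0 L in auto)
    have cov: "P \<subseteq> (\<Union>k\<in>I. Q k)"
    proof
      fix x assume x: "x \<in> P"
      define k where "k = restrict (\<lambda>b. min (N - 1) (nat \<lfloor>(x \<bullet> b + R') / h\<rfloor>)) B"
      have tb: "0 \<le> (x \<bullet> b + R') / h" "(x \<bullet> b + R') / h \<le> real N" if "b \<in> B" for b
      proof -
        have "\<bar>x \<bullet> b\<bar> \<le> norm x" using that by (intro Basis_le_norm) (simp add: B_def)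
        also have "\<dots> \<le> R'" using x by (simp add: P_def)
        finally have xb: "\<bar>x \<bullet> b\<bar> \<le> R'" .
        show "0 \<le> (x \<bullet> b + R') / h" using xb h0 by simp
        have "x \<bullet> b + R' \<le> 2 * R'" using xb by simp
        also have "\<dots> = h * real N" using N1 by (simp add: h_def)
        finally show "(x \<bullet> b + R') / h \<le> real N" using h0 by (simp add: field_simps)
      qed
      have "k \<in> I" unfolding I_def k_def using N1 by auto
      moreover have "x \<in> Q k"
        unfolding Q_def
      proof (safe)
        show "x \<bullet> u = a" using x by (simp add: P_def)
        fix b assume b: "b \<in> B"
        have kb: "k b = min (N - 1) (nat \<lfloor>(x \<bullet> b + R') / h\<rfloor>)" using b by (simp add: k_def)
        have 1: "real (k b) \<le> (x \<bullet> b + R') / h" using floor_bin(1)[OF tb[OF b] N1] kb by simp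
        have 2: "(x \<bullet> b + R') / h \<le> real (k b) + 1" using floor_bin(2)[OF tb[OF b] N1] kb by simp
        show "- R' + h * real (k b) \<le> x \<bullet> b" using 1 h0 by (simp add: field_simps)
        show "x \<bullet> b \<le> - R' + h * (real (k b) + 1)" using 2 h0 by (simp add: field_simps)
      qed
      ultimately show "x \<in> (\<Union>k\<in>I. Q k)" by blast
    qed
    have "HA s \<delta> P \<le> (\<Sum>k\<in>I. hcontent s (Q k))"
      by (rule HA_finite_cover[OF I cov Qb]) (use Qd hL d in \<open>auto intro: order_trans\<close>)
    also have "\<dots> \<le> (\<Sum>k\<in>I. ennreal (V * (h * L / 2) ^ s))"
    proof (rule sum_mono)
      fix k
      show "hcontent s (Q k) \<le> ennreal (V * (h * L / 2) ^ s)"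
      proof (cases "Q k = {}")
        case True then show ?thesis by simp
      next
        case False
        have "V * (diameter (Q k) / 2) ^ s \<le> V * (h * L / 2) ^ s"
        proof -
          have dg: "0 \<le> diameter (Q k) / 2" using diameter_ge_0[OF Qb[of k]] by simp
          have "diameter (Q k) / 2 \<le> h * L / 2" using Qd[of k] by simp
          then show ?thesis using dg V by (intro mult_left_mono power_mono) auto
        qed
        then show ?thesis using False by (simp add: hcontent_def V_def ennreal_leI)
      qed
    qed
    also have "\<dots> = ennreal (real (card I) * (V * (h * L / 2) ^ s))"
      by (simp add: ennreal_of_nat_eq_real_of_nat ennreal_mult' V h0 L)
    also have "real (card I) * (V * (h * L / 2) ^ s) = V * (R' * L) ^ s"
    proof -
      have "h * L / 2 = R' * L / real N" by (simp add: h_def)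
      then have "real (card I) * (V * (h * L / 2) ^ s) = real N ^ s * (V * ((R' * L) ^ s / real N ^ s))"
        by (simp add: cardI power_divide)
      also have "\<dots> = V * (R' * L) ^ s" using N1 by simp
      finally show ?thesis .
    qed
    finally show ?thesis .
  qed
  have "HO s P \<le> ennreal (V * (R' * L) ^ s)" by (rule HO_le) (rule main)
  moreover have "HO s ({x. x \<bullet> u = a} \<inter> cball 0 R) \<le> HO s P"
    by (rule HO_mono) (use R' in \<open>auto simp: P_def\<close>)
  ultimately show ?thesis unfolding s_def by (metis ennreal_neq_top neq_top_trans)
qed

lemma int_polar_neg:
  fixes C :: "'a::euclidean_space set"
  assumes "u \<in> interior (polar_cone C)"
  obtains e where "e > 0" "\<And>x. x \<in> C \<Longrightarrow> x \<bullet> u \<le> - e * norm x"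
proof -
  obtain e where e: "e > 0" "ball u e \<subseteq> polar_cone C" using assms mem_interior by blast
  have "x \<bullet> u \<le> - (e/2) * norm x" if x: "x \<in> C" for x
  proof (cases "x = 0")
    case True then show ?thesis by simp
  next
    case False
    define v where "v = u + (e / 2 / norm x) *\<^sub>R x"
    have "dist u v = e / 2" using False e(1) by (simp add: v_def dist_norm)
    then have "v \<in> polar_cone C" using e by auto
    then have "v \<bullet> x \<le> 0" using x by (auto simp: polar_cone_def)
    moreover have "v \<bullet> x = u \<bullet> x + (e/2) * norm x"
      using False by (simp add: v_def inner_add_left power2_norm_eq_inner[symmetric] power2_eq_square)
    ultimately show ?thesis by (simp add: inner_commute)
  qed
  then show ?thesis using that[of "e/2"] e(1) by auto
qed

lemma polar_le: "u \<in> polar_cone C \<Longrightarrow> y \<in> C \<Longrightarrow> y \<bullet> u \<le> 0"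
  by (auto simp: polar_cone_def inner_commute)

lemma int_scale:
  fixes C :: "'a::euclidean_space set"
  assumes "cone C" "c > 0" "z \<in> interior C"
  shows "c *\<^sub>R z \<in> interior C"
proof -
  obtain e where e: "e > 0" "ball z e \<subseteq> C" using assms(3) mem_interior by blast
  have "ball (c *\<^sub>R z) (c * e) \<subseteq> C"
  proof
    fix y assume "y \<in> ball (c *\<^sub>R z) (c * e)"
    then have lt: "norm (c *\<^sub>R z - y) < c * e" by (simp add: dist_norm)
    have "z - (1/c) *\<^sub>R y = (1/c) *\<^sub>R (c *\<^sub>R z - y)" using assms(2) by (simp add: algebra_simps)
    then have "norm (z - (1/c) *\<^sub>R y) = norm (c *\<^sub>R z - y) / c" using assms(2) by simp
    also have "\<dots> < e" using lt assms(2) by (simp add: field_simps)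
    finally have "dist z ((1/c) *\<^sub>R y) < e" by (simp add: dist_norm)
    then have "(1/c) *\<^sub>R y \<in> C" using e by auto
    moreover have "\<forall>x\<in>C. \<forall>c\<ge>0. c *\<^sub>R x \<in> C" using assms(1) by (simp add: cone_def)
    ultimately have "c *\<^sub>R ((1/c) *\<^sub>R y) \<in> C" using assms(2) by (meson less_imp_le)
    then show "y \<in> C" using assms(2) by simp
  qed
  then show ?thesis using e(1) assms(2) mem_interior by (metis mult_pos_pos)
qed

lemma cone_scale: "cone C \<Longrightarrow> x \<in> C \<Longrightarrow> 0 \<le> c \<Longrightarrow> c *\<^sub>R x \<in> C"
  by (simp add: cone_def)

locale cs =
  fixes C :: "'a::euclidean_space set" and u0 :: 'a
  assumes closedC: "closed C" and convC: "convex C" and coneC: "cone C"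
    and intC: "interior C \<noteq> {}" and u0: "u0 \<in> Omega C"
begin

definition F where "F t = {x \<in> C. x \<bullet> u0 = - t}"
definition K where "K t = C \<inter> {x. x \<bullet> u0 \<le> - t}"
definition E where "E t = F t - interior C"

lemma u0_norm: "norm u0 = 1" using u0 by (simp add: Omega_def)
lemma u0_int: "u0 \<in> interior (polar_cone C)" using u0 by (simp add: Omega_def)
lemma u0_polar: "u0 \<in> polar_cone C" using u0_int interior_subset by blast
lemma u0u0: "u0 \<bullet> u0 = 1" using u0_norm by (simp add: power2_norm_eq_inner[symmetric])

lemma Omega_polar: "u \<in> Omega C \<Longrightarrow> u \<in> polar_cone C"
  using interior_subset by (auto simp: Omega_def)

definition e0 where "e0 = (SOME e. e > 0 \<and> (\<forall>x\<in>C. x \<bullet> u0 \<le> - e * norm x))"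

lemma e0: "e0 > 0" "\<And>x. x \<in> C \<Longrightarrow> x \<bullet> u0 \<le> - e0 * norm x"
proof -
  obtain e where "e > 0" "\<And>x. x \<in> C \<Longrightarrow> x \<bullet> u0 \<le> - e * norm x" by (rule int_polar_neg[OF u0_int]) auto
  then have "\<exists>e. e > 0 \<and> (\<forall>x\<in>C. x \<bullet> u0 \<le> - e * norm x)" by blast
  then have "e0 > 0 \<and> (\<forall>x\<in>C. x \<bullet> u0 \<le> - e0 * norm x)" unfolding e0_def by (rule someI_ex)
  then show "e0 > 0" "\<And>x. x \<in> C \<Longrightarrow> x \<bullet> u0 \<le> - e0 * norm x" by auto
qed

lemma F_norm_le: "x \<in> F t \<Longrightarrow> e0 * norm x \<le> t"
  using e0(2)[of x] by (auto simp: F_def)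

lemma F_norm_ge: "x \<in> F t \<Longrightarrow> t \<le> norm x"
proof -
  assume x: "x \<in> F t"
  have "\<bar>x \<bullet> u0\<bar> \<le> norm x * norm u0" by (rule Cauchy_Schwarz_ineq2)
  then show ?thesis using x u0_norm by (auto simp: F_def)
qed

lemma F_sub_cball: "F t \<subseteq> cball 0 (t / e0)"
  using F_norm_le e0(1) by (auto simp: field_simps)

lemma F_sub_hyper: "F t \<subseteq> {x. x \<bullet> u0 = - t}" by (auto simp: F_def)

lemma closed_F: "closed (F t)"
proof -
  have "F t = C \<inter> {x. u0 \<bullet> x = - t}" by (auto simp: F_def inner_commute)
  then show ?thesis using closedC by (simp add: closed_Int closed_hyperplane)
qed

lemma compact_F: "compact (F t)"
  using closed_F F_sub_cball by (meson bounded_cball bounded_subset compact_eq_bounded_closed)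

lemma closed_E: "closed (E t)"
  unfolding E_def using closed_F by (simp add: closed_Diff)

lemma convex_F: "convex (F t)"
proof -
  have "F t = C \<inter> {x. u0 \<bullet> x = - t}" by (auto simp: F_def inner_commute)
  then show ?thesis using convC by (simp add: convex_Int convex_hyperplane)
qed

lemma closed_K: "closed (K t)"
proof -
  have "K t = C \<inter> {x. u0 \<bullet> x \<le> - t}" by (auto simp: K_def inner_commute)
  then show ?thesis using closedC by (simp add: closed_Int closed_halfspace_le)
qed

lemma convex_K: "convex (K t)"
proof -
  have "K t = C \<inter> {x. u0 \<bullet> x \<le> - t}" by (auto simp: K_def inner_commute)
  then show ?thesis using convC by (simp add: convex_Int convex_halfspace_le)
qed

definition p where "p = (SOME p. p \<in> interior C \<and> p \<bullet> u0 = -1)"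

lemma p: "p \<in> interior C" "p \<bullet> u0 = -1"
proof -
  obtain z where z: "z \<in> interior C" using intC by blast
  then have zC: "z \<in> C" using interior_subset by blast
  have "z \<noteq> 0"
  proof
    assume "z = 0"
    then obtain r where r: "r > 0" "ball 0 r \<subseteq> C" using z mem_interior by blast
    then have "(r/2) *\<^sub>R u0 \<in> C" using u0_norm by (auto simp: dist_norm)
    then have "((r/2) *\<^sub>R u0) \<bullet> u0 \<le> 0" using u0_polar by (rule polar_le[rotated])
    then show False using r(1) u0u0 by simp
  qed
  then have "0 < e0 * norm z" using e0(1) by simp
  then have zu: "z \<bullet> u0 < 0" using e0(2)[OF zC] by linarith
  define q where "q = (1 / (- (z \<bullet> u0))) *\<^sub>R z"
  have "q \<in> interior C" unfolding q_def by (rule int_scale[OF coneC _ z]) (use zu in simp)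
  moreover have "q \<bullet> u0 = -1" using zu by (simp add: q_def)
  ultimately have "\<exists>p. p \<in> interior C \<and> p \<bullet> u0 = -1" by blast
  then have "p \<in> interior C \<and> p \<bullet> u0 = -1" unfolding p_def by (rule someI_ex)
  then show "p \<in> interior C" "p \<bullet> u0 = -1" by auto
qed

lemma pC: "p \<in> C" using p(1) interior_subset by blast

lemma tp_F: "t \<ge> 0 \<Longrightarrow> t *\<^sub>R p \<in> F t"
  using pC p(2) coneC by (auto simp: F_def cone_def)

lemma F_sub_K: "F t \<subseteq> K t" by (auto simp: F_def K_def)

lemma F_scale: assumes "t > 0" shows "(\<lambda>x. t *\<^sub>R x) ` F 1 = F t"
proof
  show "(\<lambda>x. t *\<^sub>R x) ` F 1 \<subseteq> F t" using assms coneC by (auto simp: F_def cone_def)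
  show "F t \<subseteq> (\<lambda>x. t *\<^sub>R x) ` F 1"
  proof
    fix x assume x: "x \<in> F t"
    have "(1/t) *\<^sub>R x \<in> F 1" using x assms coneC by (auto simp: F_def cone_def)
    moreover have "x = t *\<^sub>R ((1/t) *\<^sub>R x)" using assms by simp
    ultimately show "x \<in> (\<lambda>x. t *\<^sub>R x) ` F 1" by blast
  qed
qed

lemma E_scale: assumes "t > 0" shows "(\<lambda>x. t *\<^sub>R x) ` E 1 = E t"
proof
  show "(\<lambda>x. t *\<^sub>R x) ` E 1 \<subseteq> E t"
  proof
    fix y assume "y \<in> (\<lambda>x. t *\<^sub>R x) ` E 1"
    then obtain x where x: "x \<in> E 1" "y = t *\<^sub>R x" by auto
    have "y \<in> F t" using x F_scale[OF assms] by (auto simp: E_def)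
    moreover have "y \<notin> interior C"
    proof
      assume "y \<in> interior C"
      then have "(1/t) *\<^sub>R y \<in> interior C" using int_scale[OF coneC, of "1/t" y] assms by simp
      then show False using x assms by (auto simp: E_def)
    qed
    ultimately show "y \<in> E t" by (simp add: E_def)
  qed
  show "E t \<subseteq> (\<lambda>x. t *\<^sub>R x) ` E 1"
  proof
    fix y assume y: "y \<in> E t"
    then obtain x where x: "x \<in> F 1" "y = t *\<^sub>R x" using F_scale[OF assms] by (auto simp: E_def)
    have "x \<notin> interior C"
    proof
      assume "x \<in> interior C"
      then have "t *\<^sub>R x \<in> interior C" by (rule int_scale[OF coneC assms])
      then show False using x y by (auto simp: E_def)
    qed
    then show "y \<in> (\<lambda>x. t *\<^sub>R x) ` E 1" using x by (auto simp: E_def)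
  qed
qed

lemma tp_K: "t \<ge> 0 \<Longrightarrow> t *\<^sub>R p \<in> K t" using tp_F[of t] F_sub_K[of t] by blast

lemma K_ne: "t \<ge> 0 \<Longrightarrow> K t \<noteq> {}" using tp_K by blast

lemma pseudo_K: assumes "t > 0" shows "pseudo_cone (K t)"
  unfolding pseudo_cone_def
proof (intro conjI allI impI ballI)
  show "K t \<noteq> {}" using K_ne assms by simp
  show "closed (K t)" by (rule closed_K)
  show "convex (K t)" by (rule convex_K)
  show "0 \<notin> K t" using assms by (simp add: K_def)
  fix l :: real and x assume l: "1 \<le> l" and x: "x \<in> K t"
  have "l *\<^sub>R x \<in> C" using x l coneC by (auto simp: K_def cone_def)
  moreover have "(l *\<^sub>R x) \<bullet> u0 \<le> - t"
  proof -
    have "x \<bullet> u0 \<le> - t" using x by (simp add: K_def)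
    then have "l * (x \<bullet> u0) \<le> l * (- t)" using l by (intro mult_left_mono) auto
    also have "\<dots> \<le> - t" using l assms by (simp add: mult_le_cancel_right1)
    finally show ?thesis by simp
  qed
  ultimately show "l *\<^sub>R x \<in> K t" by (simp add: K_def)
qed

lemma convex_cone_add: "x \<in> C \<Longrightarrow> z \<in> C \<Longrightarrow> x + z \<in> C"
proof -
  assume "x \<in> C" "z \<in> C"
  then have "(1/2) *\<^sub>R x + (1/2) *\<^sub>R z \<in> C" using convC by (intro convexD) auto
  then have "2 *\<^sub>R ((1/2) *\<^sub>R x + (1/2) *\<^sub>R z) \<in> C" using coneC by (auto simp: cone_def)
  then show "x + z \<in> C" by (simp add: scaleR_add_right)
qed

lemma rec_K: assumes "t > 0" shows "recession_cone (K t) = C"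
proof
  show "C \<subseteq> recession_cone (K t)"
  proof
    fix z assume z: "z \<in> C"
    have "x + z \<in> K t" if "x \<in> K t" for x
    proof -
      have "x + z \<in> C" using that z convex_cone_add by (auto simp: K_def)
      moreover have "z \<bullet> u0 \<le> 0" using polar_le[OF u0_polar z] .
      ultimately show ?thesis using that by (auto simp: K_def inner_add_left)
    qed
    then show "z \<in> recession_cone (K t)" by (simp add: recession_cone_def)
  qed
  show "recession_cone (K t) \<subseteq> C"
  proof
    fix z assume z: "z \<in> recession_cone (K t)"
    define x0 where "x0 = t *\<^sub>R p"
    have x0: "x0 \<in> K t" using tp_K assms by (auto simp: x0_def)
    have xk: "x0 + real k *\<^sub>R z \<in> K t" for k
    proof (induction k)
      case 0 then show ?case using x0 by simp
    next
      case (Suc k)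
      then have "(x0 + real k *\<^sub>R z) + z \<in> K t" using z by (simp add: recession_cone_def)
      then show ?case by (simp add: algebra_simps)
    qed
    define y where "y n = inverse (real (Suc n)) *\<^sub>R x0 + z" for n
    have yC: "y n \<in> C" for n
    proof -
      have "inverse (real (Suc n)) *\<^sub>R (x0 + real (Suc n) *\<^sub>R z) \<in> C"
        using xk[of "Suc n"] coneC by (auto simp: K_def cone_def)
      then show ?thesis by (simp add: y_def scaleR_add_right)
    qed
    have "y \<longlonglongrightarrow> 0 *\<^sub>R x0 + z" unfolding y_def
      by (intro tendsto_intros LIMSEQ_inverse_real_of_nat)
    then have "y \<longlonglongrightarrow> z" by simp
    then show "z \<in> C" using closedC yC closed_sequentially by blast
  qed
qed

lemma bdd_K: "u \<in> polar_cone C \<Longrightarrow> bdd_above ((\<lambda>y. u \<bullet> y) ` K t)"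
  by (rule bdd_aboveI[of _ 0]) (auto simp: K_def polar_cone_def)

lemma supp_K_u0: assumes "t > 0" shows "support_fun (K t) u0 = - t"
  unfolding support_fun_def
proof (rule antisym)
  show "(SUP y\<in>K t. u0 \<bullet> y) \<le> - t"
    by (rule cSUP_least) (use K_ne assms in \<open>auto simp: K_def inner_commute\<close>)
  have "u0 \<bullet> (t *\<^sub>R p) = - t" using p(2) by (simp add: inner_commute)
  moreover have "t *\<^sub>R p \<in> K t" using tp_K assms by auto
  ultimately show "- t \<le> (SUP y\<in>K t. u0 \<bullet> y)"
    by (metis bdd_K[OF u0_polar] cSUP_upper order_refl)
qed

lemma K_in: assumes "t > 0" "u0 \<in> \<omega>" "\<omega> \<subseteq> Omega C" shows "K t \<in> K_C_omega C \<omega>"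
  unfolding K_C_omega_def C_pseudo_cone_def
proof (intro CollectI conjI)
  show "pseudo_cone (K t)" by (rule pseudo_K[OF assms(1)])
  show "recession_cone (K t) = C" by (rule rec_K[OF assms(1)])
  show "K t = C \<inter> (\<Inter>u\<in>\<omega>. halfspace_minus (K t) u)"
  proof
    show "K t \<subseteq> C \<inter> (\<Inter>u\<in>\<omega>. halfspace_minus (K t) u)"
    proof
      fix x assume x: "x \<in> K t"
      have "x \<bullet> u \<le> support_fun (K t) u" if "u \<in> \<omega>" for u
      proof -
        have "u \<in> polar_cone C" using that assms(3) Omega_polar by blast
        then show ?thesis unfolding support_fun_def using x
          by (metis bdd_K cSUP_upper inner_commute)
      qed
      then show "x \<in> C \<inter> (\<Inter>u\<in>\<omega>. halfspace_minus (K t) u)"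
        using x by (auto simp: K_def halfspace_minus_def)
    qed
    show "C \<inter> (\<Inter>u\<in>\<omega>. halfspace_minus (K t) u) \<subseteq> K t"
    proof
      fix x assume x: "x \<in> C \<inter> (\<Inter>u\<in>\<omega>. halfspace_minus (K t) u)"
      then have "x \<bullet> u0 \<le> support_fun (K t) u0" using assms(2) by (auto simp: halfspace_minus_def)
      then show "x \<in> K t" using x supp_K_u0[OF assms(1)] by (simp add: K_def)
    qed
  qed
qed

lemma neg_supp_K: "t > 0 \<Longrightarrow> neg_support_fun (K t) u0 = t"
  by (simp add: neg_support_fun_def supp_K_u0)

lemma K_neq: assumes "0 < a" "a < b" shows "K a \<noteq> K b"
proof
  assume eq: "K a = K b"
  have "a *\<^sub>R p \<in> K a" using tp_K assms by auto
  then have "a *\<^sub>R p \<in> K b" using eq by simp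
  then show False using p(2) assms by (simp add: K_def)
qed

end

context cs begin

lemma normal_K:
  assumes "x \<in> K t" "outer_unit_normal (K t) x u"
  shows "\<And>y. y \<in> K t \<Longrightarrow> (y - x) \<bullet> u \<le> 0" "norm u = 1"
  using assms by (auto simp: outer_unit_normal_def)

lemma rsi_sub_F:
  assumes t: "t > 0" and eta: "\<eta> \<subseteq> Omega C"
  shows "rev_sph_image (K t) \<eta> \<subseteq> F t"
proof
  fix x assume "x \<in> rev_sph_image (K t) \<eta>"
  then obtain u where x: "x \<in> frontier (K t)" and u: "u \<in> \<eta>" and n: "outer_unit_normal (K t) x u"
    by (auto simp: rev_sph_image_def)
  have xK: "x \<in> K t" using x frontier_subset_closed[OF closed_K] by blast
  have nrm: "\<And>y. y \<in> K t \<Longrightarrow> (y - x) \<bullet> u \<le> 0" using n by (auto simp: outer_unit_normal_def)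
  have uint: "u \<in> interior (polar_cone C)" using u eta by (auto simp: Omega_def)
  obtain e where e: "e > 0" "\<And>y. y \<in> C \<Longrightarrow> y \<bullet> u \<le> - e * norm y" by (rule int_polar_neg[OF uint]) auto
  have xC: "x \<in> C" and xt: "x \<bullet> u0 \<le> - t" using xK by (auto simp: K_def)
  have "\<not> x \<bullet> u0 < - t"
  proof
    assume lt: "x \<bullet> u0 < - t"
    define s where "s = t / (- (x \<bullet> u0))"
    have s: "0 < s" "s < 1" using lt t by (auto simp: s_def field_simps)
    have "s *\<^sub>R x \<in> K t"
    proof -
      have "(s *\<^sub>R x) \<bullet> u0 = - t" using lt t by (simp add: s_def)
      then show ?thesis using xC s coneC by (auto simp: K_def cone_def)
    qed
    then have "(s - 1) * (x \<bullet> u) \<le> 0" using nrm[of "s *\<^sub>R x"] by (simp add: algebra_simps inner_diff_left)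
    then have a: "0 \<le> x \<bullet> u" using s by (simp add: mult_le_0_iff)
    have "x \<noteq> 0" using lt t by auto
    then have "0 < e * norm x" using e(1) by simp
    then have "x \<bullet> u < 0" using e(2)[OF xC] by linarith
    then show False using a by simp
  qed
  then show "x \<in> F t" using xC xt by (simp add: F_def)
qed

lemma rsi_sub_E:
  assumes t: "t > 0" and eta: "\<eta> \<subseteq> Omega C" and nu: "u0 \<notin> \<eta>"
  shows "rev_sph_image (K t) \<eta> \<subseteq> E t"
proof
  fix x assume xr: "x \<in> rev_sph_image (K t) \<eta>"
  then have xF: "x \<in> F t" using rsi_sub_F[OF t eta] by blast
  from xr obtain u where u: "u \<in> \<eta>" and n: "outer_unit_normal (K t) x u"
    by (auto simp: rev_sph_image_def)
  have nrm: "\<And>y. y \<in> K t \<Longrightarrow> (y - x) \<bullet> u \<le> 0" and un: "norm u = 1"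
    using n by (auto simp: outer_unit_normal_def)
  have uu0: "u \<noteq> u0" using u nu by auto
  have "x \<notin> interior C"
  proof
    assume "x \<in> interior C"
    then obtain r where r: "r > 0" "ball x r \<subseteq> C" using mem_interior by blast
    have dir: "d \<bullet> u \<le> 0" if "d \<bullet> u0 \<le> 0" "norm d < r" for d
    proof -
      have "x + d \<in> C" using r that(2) by (auto simp: dist_norm)
      moreover have "(x + d) \<bullet> u0 \<le> - t" using xF that(1) by (simp add: F_def inner_add_left)
      ultimately have "x + d \<in> K t" by (simp add: K_def)
      then show ?thesis using nrm[of "x + d"] by simp
    qed
    have "(- (r/2) *\<^sub>R u0) \<bullet> u \<le> 0" by (rule dir) (use r u0u0 u0_norm in auto)
    then have "0 \<le> r * (u0 \<bullet> u)" by simp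
    then have uu: "0 \<le> u \<bullet> u0" using r by (simp add: inner_commute zero_le_mult_iff)
    define w where "w = u - (u \<bullet> u0) *\<^sub>R u0"
    have wu0: "w \<bullet> u0 = 0" using u0u0 by (simp add: w_def inner_diff_left)
    have wu: "w \<bullet> u = w \<bullet> w" using wu0 by (simp add: w_def inner_diff_right inner_commute)
    have "w = 0"
    proof (rule ccontr)
      assume wn: "w \<noteq> 0"
      define d where "d = (r / (2 * norm w)) *\<^sub>R w"
      have "norm d = r / 2" using wn r by (simp add: d_def)
      then have "d \<bullet> u \<le> 0" using r wu0 by (intro dir) (auto simp: d_def)
      then have "(r / (2 * norm w)) * (w \<bullet> w) \<le> 0" using wu by (simp add: d_def)
      moreover have "0 < r / (2 * norm w)" using wn r by simp
      ultimately have "w \<bullet> w \<le> 0" by (metis mult_le_0_iff not_le)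
      then show False using wn inner_gt_zero_iff[of w] by linarith
    qed
    then have ueq: "u = (u \<bullet> u0) *\<^sub>R u0" by (simp add: w_def)
    then have "norm u = \<bar>u \<bullet> u0\<bar>" using u0_norm by (metis mult.right_neutral norm_scaleR real_norm_def)
    then have "u \<bullet> u0 = 1" using un uu by simp
    then have "u = u0" using ueq by simp
    then show False using uu0 by simp
  qed
  then show "x \<in> E t" using xF by (simp add: E_def)
qed

lemma rsi_eq_F:
  assumes t: "t > 0" and eta: "\<eta> \<subseteq> Omega C" and iu: "u0 \<in> \<eta>"
  shows "rev_sph_image (K t) \<eta> = F t"
proof
  show "rev_sph_image (K t) \<eta> \<subseteq> F t" by (rule rsi_sub_F[OF t eta])
  show "F t \<subseteq> rev_sph_image (K t) \<eta>"
  proof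
    fix x assume xF: "x \<in> F t"
    have xK: "x \<in> K t" using xF F_sub_K by blast
    have "x \<notin> interior (K t)"
    proof
      assume "x \<in> interior (K t)"
      then obtain r where r: "r > 0" "ball x r \<subseteq> K t" using mem_interior by blast
      have "x + (r/2) *\<^sub>R u0 \<in> ball x r" using r u0_norm by (simp add: dist_norm)
      then have "x + (r/2) *\<^sub>R u0 \<in> K t" using r by blast
      then show False using xF r u0u0 by (simp add: K_def F_def inner_add_left)
    qed
    then have "x \<in> frontier (K t)" using xK closure_subset by (auto simp: frontier_def)
    moreover have "outer_unit_normal (K t) x u0"
      using xF u0_norm by (auto simp: outer_unit_normal_def K_def F_def inner_diff_left)
    ultimately show "x \<in> rev_sph_image (K t) \<eta>" using iu by (auto simp: rev_sph_image_def)
  qed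
qed

end

lemma measure_of_dirac:
  assumes u0: "u0 \<in> \<Omega>" and S: "S \<subseteq> Pow \<Omega>"
    and f: "\<And>\<eta>. \<eta> \<subseteq> \<Omega> \<Longrightarrow> f \<eta> = (if u0 \<in> \<eta> then A else 0)"
    and X: "X \<in> sigma_sets \<Omega> S"
  shows "emeasure (measure_of \<Omega> S f) X = (if u0 \<in> X then A else 0)"
proof -
  let ?M = "measure_of \<Omega> S f"
  have sets: "sets ?M = sigma_sets \<Omega> S" using S by (rule sets_measure_of)
  have sub: "Y \<subseteq> \<Omega>" if "Y \<in> sigma_sets \<Omega> S" for Y using sigma_sets_into_sp[OF S that] .
  have "emeasure ?M X = f X"
  proof (rule emeasure_measure_of[OF refl S])
    show "positive (sets ?M) f" using f by (auto simp: positive_def)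
    show "countably_additive (sets ?M) f"
      unfolding countably_additive_def sets
    proof (intro allI impI)
      fix B :: "nat \<Rightarrow> _" assume B: "range B \<subseteq> sigma_sets \<Omega> S" "disjoint_family B" "(\<Union>i. B i) \<in> sigma_sets \<Omega> S"
      have fB: "f (B i) = A * indicator (B i) u0" for i
      proof -
        have "B i \<in> sigma_sets \<Omega> S" using B(1) by auto
        then show ?thesis using f[OF sub[of "B i"]] by (auto simp: indicator_def)
      qed
      have fU: "f (\<Union>i. B i) = (if u0 \<in> (\<Union>i. B i) then A else 0)" using f[OF sub[OF B(3)]] .
      show "(\<Sum>i. f (B i)) = f (\<Union>i. B i)"
      proof (cases "\<exists>i. u0 \<in> B i")
        case True
        then obtain i where i: "u0 \<in> B i" by blast
        have "(\<Sum>n. f (B n)) = (\<Sum>n. A * indicator (B n) u0)" by (simp add: fB)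
        also have "\<dots> = A" by (rule suminf_cmult_indicator[OF B(2) i])
        finally show ?thesis using fU i by auto
      next
        case False
        then show ?thesis using fU by (simp add: fB)
      qed
    qed
    show "X \<in> sets ?M" using X sets by simp
  qed
  then show ?thesis using f[OF sub[OF X]] by simp
qed

lemma Omega_borel: "Omega C \<in> sets borel"
  unfolding Omega_def by (intro sets.Int borel_closed borel_open) auto

context cs begin

abbreviation "HS \<equiv> (hausdorff_measure (DIM('a) - 1) :: 'a measure)"

lemma closed_sets_HS: "closed X \<Longrightarrow> X \<in> sets HS"
  using borel_sub_HM borel_closed by blast

lemma F_sets: "F t \<in> sets HS" by (rule closed_sets_HS[OF closed_F])
lemma E_sets: "E t \<in> sets HS" by (rule closed_sets_HS[OF closed_E])

lemma u0_ne: "u0 \<noteq> 0" using u0_norm by auto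

lemma F1_fin: "emeasure HS (F 1) \<noteq> top"
proof -
  have "emeasure HS (F 1) = HO (DIM('a) - 1) (F 1)" by (rule HM_emeasure[OF F_sets])
  also have "\<dots> \<le> HO (DIM('a) - 1) ({x. x \<bullet> u0 = -1} \<inter> cball 0 (1 / e0))"
    by (rule HO_mono) (use F_sub_cball F_sub_hyper in blast)
  finally show ?thesis using HO_hyper_finite[OF u0_ne] by (metis neq_top_trans)
qed

definition D where "D \<sigma> = (\<lambda>x. (1 - \<sigma>) *\<^sub>R p + \<sigma> *\<^sub>R x) ` E 1"

lemma D_sub: "0 \<le> \<sigma> \<Longrightarrow> \<sigma> \<le> 1 \<Longrightarrow> D \<sigma> \<subseteq> F 1"
proof
  fix y assume s: "0 \<le> \<sigma>" "\<sigma> \<le> 1" and "y \<in> D \<sigma>"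
  then obtain x where x: "x \<in> E 1" "y = (1 - \<sigma>) *\<^sub>R p + \<sigma> *\<^sub>R x" by (auto simp: D_def)
  have pF: "p \<in> F 1" using pC p(2) by (simp add: F_def)
  have "x \<in> F 1" using x by (simp add: E_def)
  then show "y \<in> F 1" using x(2) convexD[OF convex_F pF _ _ _] s by auto
qed

lemma D_disj:
  assumes s: "0 < \<sigma>1" "\<sigma>1 < \<sigma>2" "\<sigma>2 \<le> 1"
  shows "D \<sigma>1 \<inter> D \<sigma>2 = {}"
proof (rule ccontr)
  assume "D \<sigma>1 \<inter> D \<sigma>2 \<noteq> {}"
  then obtain x1 x2 where x: "x1 \<in> E 1" "x2 \<in> E 1"
    "(1 - \<sigma>1) *\<^sub>R p + \<sigma>1 *\<^sub>R x1 = (1 - \<sigma>2) *\<^sub>R p + \<sigma>2 *\<^sub>R x2"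
    by (auto simp: D_def)
  define l where "l = \<sigma>1 / \<sigma>2"
  have l: "0 < l" "l < 1" using s by (auto simp: l_def)
  have "\<sigma>2 *\<^sub>R x2 = (\<sigma>2 - \<sigma>1) *\<^sub>R p + \<sigma>1 *\<^sub>R x1" using x(3) by (simp add: algebra_simps)
  then have "x2 = (1/\<sigma>2) *\<^sub>R ((\<sigma>2 - \<sigma>1) *\<^sub>R p + \<sigma>1 *\<^sub>R x1)" using s by (metis less_irrefl order_less_trans scaleR_scaleR divide_self_if scaleR_one times_divide_eq_left mult_1)
  then have x2: "x2 = (1 - l) *\<^sub>R p + l *\<^sub>R x1" using s by (simp add: l_def algebra_simps diff_divide_distrib)
  have pi: "p \<in> interior C" by (rule p(1))
  have x1n: "x1 \<notin> interior C" "x1 \<in> C" using x(1) by (auto simp: E_def F_def)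
  have "p \<noteq> x1" using pi x1n by auto
  then have "x2 \<in> open_segment p x1" using l x2 by (auto simp: in_segment)
  moreover have "open_segment p x1 \<subseteq> interior C"
    by (rule in_interior_closure_convex_segment[OF convC pi]) (use x1n closure_subset in auto)
  ultimately have "x2 \<in> interior C" by blast
  then show False using x(2) by (simp add: E_def)
qed

lemma D_meas:
  assumes "0 < \<sigma>"
  shows "D \<sigma> \<in> sets HS" "emeasure HS (D \<sigma>) = ennreal (\<sigma> ^ (DIM('a) - 1)) * emeasure HS (E 1)"
  unfolding D_def using HM_aff[OF assms E_sets] by auto

lemma E1_null: "emeasure HS (E 1) = 0"
proof (rule ccontr)
  assume ne: "emeasure HS (E 1) \<noteq> 0"
  let ?s = "DIM('a) - 1"
  have EF: "emeasure HS (E 1) \<le> emeasure HS (F 1)"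
    by (rule emeasure_mono[OF _ F_sets]) (auto simp: E_def)
  define e where "e = enn2real (emeasure HS (E 1))"
  define f where "f = enn2real (emeasure HS (F 1))"
  have Efin: "emeasure HS (E 1) \<noteq> top"
  proof
    assume "emeasure HS (E 1) = top"
    then have "emeasure HS (F 1) = top" using EF by (simp add: top_unique)
    then show False using F1_fin by simp
  qed
  have Ee: "emeasure HS (E 1) = ennreal e" using Efin unfolding e_def by (simp add: ennreal_enn2real_if)
  have Ff: "emeasure HS (F 1) = ennreal f" using F1_fin unfolding f_def by (simp add: ennreal_enn2real_if)
  have "e \<noteq> 0" using ne Ee by auto
  then have e0: "0 < e" by (simp add: e_def enn2real_nonneg less_le)
  define c where "c = (1/2) ^ ?s * e"
  have c: "0 < c" using e0 by (simp add: c_def)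
  have bound: "real m * c \<le> f" if m: "m \<ge> 1" for m
  proof -
    define sg where "sg i = real (m + i) / real (2 * m)" for i
    have sg: "1/2 \<le> sg i" "sg i < 1" if "i < m" for i
      using m that by (auto simp: sg_def field_simps)
    have sg_inj: "sg i < sg j" if "i < j" for i j using m that by (simp add: sg_def divide_strict_right_mono)
    have disj: "disjoint_family_on (\<lambda>i. D (sg i)) {..<m}"
      unfolding disjoint_family_on_def
    proof (intro ballI impI)
      fix i j assume ij: "i \<in> {..<m}" "j \<in> {..<m}" "i \<noteq> j"
      show "D (sg i) \<inter> D (sg j) = {}"
      proof (cases "i < j")
        case True then show ?thesis using sg[of i] sg[of j] ij sg_inj[OF True] by (intro D_disj) auto
      next
        case False then have "j < i" using ij by simp
        then show ?thesis using sg[of i] sg[of j] ij sg_inj[of j i] D_disj[of "sg j" "sg i"] by auto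
      qed
    qed
    have "(\<Sum>i<m. emeasure HS (D (sg i))) = emeasure HS (\<Union>i<m. D (sg i))"
    proof (rule sum_emeasure[OF _ disj])
      have "0 < sg i" if "i < m" for i using sg[OF that] by linarith
      then show "(\<lambda>i. D (sg i)) ` {..<m} \<subseteq> sets HS" using D_meas(1) by auto
    qed simp
    also have "\<dots> \<le> emeasure HS (F 1)"
    proof (rule emeasure_mono[OF _ F_sets])
      have "D (sg i) \<subseteq> F 1" if "i < m" for i using sg[OF that] by (intro D_sub) auto
      then show "(\<Union>i<m. D (sg i)) \<subseteq> F 1" by auto
    qed
    finally have le: "(\<Sum>i<m. emeasure HS (D (sg i))) \<le> ennreal f" using Ff by simp
    have "(\<Sum>i<m. ennreal c) \<le> (\<Sum>i<m. emeasure HS (D (sg i)))"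
    proof (rule sum_mono)
      fix i assume i: "i \<in> {..<m}"
      have "0 < sg i" using sg[of i] i by auto
      then have "emeasure HS (D (sg i)) = ennreal (sg i ^ ?s) * ennreal e" using D_meas(2) Ee by simp
      also have "\<dots> = ennreal (sg i ^ ?s * e)" using e0 \<open>0 < sg i\<close> by (simp add: ennreal_mult)
      finally have eq: "emeasure HS (D (sg i)) = ennreal (sg i ^ ?s * e)" .
      have "(1/2) ^ ?s \<le> sg i ^ ?s" using sg[of i] i by (intro power_mono) auto
      then have "c \<le> sg i ^ ?s * e" using e0 by (simp add: c_def)
      then show "ennreal c \<le> emeasure HS (D (sg i))" using eq by (simp add: ennreal_leI)
    qed
    then have "ennreal (real m * c) \<le> ennreal f" using le c
      by (simp add: ennreal_of_nat_eq_real_of_nat ennreal_mult)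
    moreover have "0 \<le> f" by (simp add: f_def)
    ultimately show ?thesis using ennreal_le_iff[of f "real m * c"] by simp
  qed
  define m where "m = nat \<lceil>f / c\<rceil> + 1"
  have "real m * c \<le> f" by (rule bound) (simp add: m_def)
  moreover have "f / c < real m" unfolding m_def by linarith
  ultimately show False using c by (simp add: field_simps)
qed

lemma Et_null: assumes "t > 0" shows "emeasure HS (E t) = 0"
proof -
  have "E t = (\<lambda>x. 0 + t *\<^sub>R x) ` E 1" using E_scale[OF assms] by simp
  then show ?thesis using HM_aff(2)[OF assms E_sets, of 0] E1_null by simp
qed

end

context cs begin

definition phi :: "'a \<Rightarrow> real" where
  "phi x = (2 * pi) powr (- real DIM('a) / 2) * exp (- (norm x)\<^sup>2 / 2)"

definition A where "A t = (\<integral>\<^sup>+ x. ennreal (phi x) * indicator (F t) x \<partial>HS)"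

lemma gsa_eq: "gauss_surface_area K' \<eta> = (\<integral>\<^sup>+ x. ennreal (phi x) * indicator (rev_sph_image K' \<eta>) x \<partial>HS)"
  by (simp add: gauss_surface_area_def phi_def)

lemma gsa_formula:
  assumes t: "t > 0" and eta: "\<eta> \<subseteq> Omega C"
  shows "gauss_surface_area (K t) \<eta> = (if u0 \<in> \<eta> then A t else 0)"
proof (cases "u0 \<in> \<eta>")
  case True
  then show ?thesis using rsi_eq_F[OF t eta True] by (simp add: gsa_eq A_def)
next
  case False
  have sub: "rev_sph_image (K t) \<eta> \<subseteq> E t" by (rule rsi_sub_E[OF t eta False])
  have null: "E t \<in> null_sets HS" by (rule null_setsI[OF Et_null[OF t] E_sets])
  have "(\<integral>\<^sup>+ x. ennreal (phi x) * indicator (rev_sph_image (K t) \<eta>) x \<partial>HS) = (\<integral>\<^sup>+ x. 0 \<partial>HS)"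
  proof (rule nn_integral_cong_AE)
    show "AE x in HS. ennreal (phi x) * indicator (rev_sph_image (K t) \<eta>) x = 0"
      by (rule AE_I'[OF null]) (use sub in \<open>auto simp: indicator_def\<close>)
  qed
  then show ?thesis using False by (simp add: gsa_eq)
qed

definition Sig where "Sig = {\<eta>. \<eta> \<in> sets borel \<and> \<eta> \<subseteq> Omega C}"

lemma Sig_sub: "Sig \<subseteq> Pow (Omega C)" by (auto simp: Sig_def)

lemma u0_Omega: "u0 \<in> Omega C" by (rule u0)

lemma gsm_emeasure:
  assumes t: "t > 0" and X: "X \<in> sigma_sets (Omega C) Sig"
  shows "emeasure (gauss_surface_measure C (K t)) X = (if u0 \<in> X then A t else 0)"
  unfolding gauss_surface_measure_def Sig_def[symmetric]
  by (rule measure_of_dirac[OF u0_Omega Sig_sub _ X]) (rule gsa_formula[OF t])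

lemma gcm_formula:
  assumes t: "t > 0" and eta: "\<eta> \<in> sets borel" "\<eta> \<subseteq> Omega C"
  shows "gauss_cone_measure C (K t) \<eta> = (if u0 \<in> \<eta> then ennreal t * A t else 0)"
proof -
  let ?M = "gauss_surface_measure C (K t)"
  have M: "?M = measure_of (Omega C) Sig (gauss_surface_area (K t))"
    by (simp add: gauss_surface_measure_def Sig_def)
  have space: "space ?M = Omega C" unfolding M by (rule space_measure_of[OF Sig_sub])
  have sets: "sets ?M = sigma_sets (Omega C) Sig" unfolding M by (rule sets_measure_of[OF Sig_sub])
  define N where "N = Omega C - {u0}"
  have "Omega C - {u0} \<in> sets borel" by (rule sets.Diff[OF Omega_borel]) (rule borel_closed, simp)
  then have NS: "N \<in> Sig" unfolding N_def Sig_def by auto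
  then have NM: "N \<in> sets ?M" using sets by auto
  have "emeasure ?M N = 0" using gsm_emeasure[OF t, of N] NS sets by (auto simp: N_def)
  then have Nnull: "N \<in> null_sets ?M" using NM by (rule null_setsI)
  have ae: "AE u in ?M. u = u0" by (rule AE_I'[OF Nnull]) (auto simp: space N_def)
  have "gauss_cone_measure C (K t) \<eta> = (\<integral>\<^sup>+ u. ennreal (neg_support_fun (K t) u) * indicator \<eta> u \<partial>?M)"
    by (simp add: gauss_cone_measure_def)
  also have "\<dots> = (\<integral>\<^sup>+ u. ennreal (neg_support_fun (K t) u0) * indicator \<eta> u0 \<partial>?M)"
    by (rule nn_integral_cong_AE) (use ae in \<open>rule eventually_mono\<close>, simp)
  also have "\<dots> = ennreal (neg_support_fun (K t) u0) * indicator \<eta> u0 * emeasure ?M (Omega C)"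
    by (simp add: space)
  also have "emeasure ?M (Omega C) = A t"
  proof -
    have "Omega C \<in> Sig" unfolding Sig_def using Omega_borel by auto
    then have "Omega C \<in> sigma_sets (Omega C) Sig" by auto
    then show ?thesis using gsm_emeasure[OF t] u0_Omega by simp
  qed
  finally show ?thesis using neg_supp_K[OF t] by (auto simp: indicator_def)
qed

lemma pre_scale:
  fixes X :: "'a set"
  assumes t: "t > 0"
  shows "(\<lambda>x. (1/t) *\<^sub>R x) -` X = (\<lambda>x. t *\<^sub>R x) ` X"
proof (rule set_eqI)
  fix x
  show "x \<in> (\<lambda>x. (1/t) *\<^sub>R x) -` X \<longleftrightarrow> x \<in> (\<lambda>x. t *\<^sub>R x) ` X"
  proof
    assume "x \<in> (\<lambda>x. (1/t) *\<^sub>R x) -` X"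
    then have "(1/t) *\<^sub>R x \<in> X" by simp
    moreover have "x = t *\<^sub>R ((1/t) *\<^sub>R x)" using t by simp
    ultimately show "x \<in> (\<lambda>x. t *\<^sub>R x) ` X" by blast
  next
    assume "x \<in> (\<lambda>x. t *\<^sub>R x) ` X"
    then obtain y where "y \<in> X" "x = t *\<^sub>R y" by blast
    then show "x \<in> (\<lambda>x. (1/t) *\<^sub>R x) -` X" using t by simp
  qed
qed

lemma meas_scale:
  assumes t: "t > 0"
  shows "(\<lambda>x. (1/t) *\<^sub>R x) \<in> measurable HS HS"
proof (rule measurableI)
  fix X assume X: "X \<in> sets HS"
  have "(\<lambda>x. (1/t) *\<^sub>R x) -` X \<inter> space HS = (\<lambda>x. 0 + t *\<^sub>R x) ` X"
    using pre_scale[OF t, of X] by simp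
  then show "(\<lambda>x. (1/t) *\<^sub>R x) -` X \<inter> space HS \<in> sets HS" using HM_aff(1)[OF t X, of 0] by simp
qed simp

lemma distr_scale:
  assumes t: "t > 0"
  shows "distr HS HS (\<lambda>x. (1/t) *\<^sub>R x) = density HS (\<lambda>_. ennreal (t ^ (DIM('a) - 1)))"
proof (rule measure_eqI)
  show "sets (distr HS HS (\<lambda>x. (1/t) *\<^sub>R x)) = sets (density HS (\<lambda>_. ennreal (t ^ (DIM('a) - 1))))" by simp
  fix X assume "X \<in> sets (distr HS HS (\<lambda>x. (1/t) *\<^sub>R x))"
  then have X: "X \<in> sets HS" by simp
  have pre: "(\<lambda>x. (1/t) *\<^sub>R x) -` X \<inter> space HS = (\<lambda>x. 0 + t *\<^sub>R x) ` X"
    using pre_scale[OF t, of X] by simp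
  have "emeasure (distr HS HS (\<lambda>x. (1/t) *\<^sub>R x)) X = emeasure HS ((\<lambda>x. 0 + t *\<^sub>R x) ` X)"
    using emeasure_distr[OF meas_scale[OF t] X] pre by simp
  also have "\<dots> = ennreal (t ^ (DIM('a) - 1)) * emeasure HS X" by (rule HM_aff(2)[OF t X])
  also have "\<dots> = emeasure (density HS (\<lambda>_. ennreal (t ^ (DIM('a) - 1)))) X"
    by (rule emeasure_density_const[OF X, symmetric])
  finally show "emeasure (distr HS HS (\<lambda>x. (1/t) *\<^sub>R x)) X = emeasure (density HS (\<lambda>_. ennreal (t ^ (DIM('a) - 1)))) X" .
qed

lemma F1_borel[measurable]: "F 1 \<in> sets borel" using closed_F borel_closed by blast

lemma phi_borel[measurable]: "phi \<in> borel_measurable borel"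
  unfolding phi_def by measurable

definition B where "B t = (\<integral>\<^sup>+ y. ennreal (phi (t *\<^sub>R y)) * indicator (F 1) y \<partial>HS)"

lemma A_scale:
  assumes t: "t > 0"
  shows "A t = ennreal (t ^ (DIM('a) - 1)) * B t"
proof -
  define g where "g y = ennreal (phi (t *\<^sub>R y)) * indicator (F 1) y" for y
  have gb: "g \<in> borel_measurable borel" unfolding g_def by measurable
  then have gH: "g \<in> borel_measurable HS" by (rule borel_meas_HM)
  have ind: "indicator (F 1) ((1/t) *\<^sub>R x) = (indicator (F t) x :: ennreal)" for x
  proof -
    have "(1/t) *\<^sub>R x \<in> F 1 \<longleftrightarrow> x \<in> F t"
    proof
      assume "(1/t) *\<^sub>R x \<in> F 1"
      then have "t *\<^sub>R ((1/t) *\<^sub>R x) \<in> F t" using F_scale[OF t] by blast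
      then show "x \<in> F t" using t by simp
    next
      assume "x \<in> F t"
      then obtain y where "y \<in> F 1" "x = t *\<^sub>R y" using F_scale[OF t] by blast
      then show "(1/t) *\<^sub>R x \<in> F 1" using t by simp
    qed
    then show ?thesis by (simp add: indicator_def)
  qed
  have "A t = (\<integral>\<^sup>+ x. g ((1/t) *\<^sub>R x) \<partial>HS)"
    unfolding A_def g_def using t by (simp add: ind)
  also have "\<dots> = (\<integral>\<^sup>+ x. g x \<partial>distr HS HS (\<lambda>x. (1/t) *\<^sub>R x))"
    by (rule nn_integral_distr[symmetric, OF meas_scale[OF t]]) (use gH in simp)
  also have "\<dots> = (\<integral>\<^sup>+ x. g x \<partial>density HS (\<lambda>_. ennreal (t ^ (DIM('a) - 1))))"
    unfolding distr_scale[OF t] by (rule refl)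
  also have "\<dots> = (\<integral>\<^sup>+ x. ennreal (t ^ (DIM('a) - 1)) * g x \<partial>HS)"
    by (rule nn_integral_density) (use gH in auto)
  also have "\<dots> = ennreal (t ^ (DIM('a) - 1)) * (\<integral>\<^sup>+ x. g x \<partial>HS)"
    by (rule nn_integral_cmult[OF gH])
  finally show ?thesis by (simp add: B_def g_def)
qed

end

lemma exp_lip: fixes a b :: real assumes "a \<le> 0" "b \<le> 0" shows "\<bar>exp a - exp b\<bar> \<le> \<bar>a - b\<bar>"
proof -
  have key: "exp y - exp x \<le> y - x" if "x \<le> y" "y \<le> 0" for x y :: real
  proof -
    have "exp y - exp x = exp y * (1 - exp (x - y))" by (simp add: exp_diff field_simps)
    also have "\<dots> \<le> 1 - exp (x - y)"
      using that by (intro mult_left_le_one_le) auto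
    also have "\<dots> \<le> y - x" using exp_ge_add_one_self[of "x - y"] by linarith
    finally show ?thesis .
  qed
  show ?thesis
  proof (cases "a \<le> b")
    case True then show ?thesis using key[OF True assms(2)] by auto
  next
    case False then show ?thesis using key[of b a] assms(1) by auto
  qed
qed

lemma ivt_pair:
  fixes G :: "real \<Rightarrow> real" and M :: real and n :: nat
  assumes cont: "\<And>T. continuous_on {0..T} G"
    and up: "\<And>t. 0 \<le> t \<Longrightarrow> G t \<le> M" and up2: "\<And>t. 0 \<le> t \<Longrightarrow> G t \<le> exp (- t\<^sup>2 / 2) * M"
    and pos: "0 < G 1" and n: "1 \<le> n"
  shows "\<exists>a b. 0 < a \<and> a < b \<and> a ^ n * G a = b ^ n * G b"
proof -
  define g where "g t = t ^ n * G t" for t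
  have M0: "0 < M" using up[of 1] pos by simp
  define c where "c = G 1 / 2"
  have c: "0 < c" "g 1 = 2 * c" using pos by (auto simp: c_def g_def)
  have gc: "continuous_on {a..b} g" if "0 \<le> a" for a b
  proof -
    have "continuous_on {a..b} G" by (rule continuous_on_subset[OF cont[of b]]) (use that in auto)
    then show ?thesis unfolding g_def by (intro continuous_intros)
  qed
  define t0 where "t0 = min (1/2) (c / (M + 1))"
  have t0: "0 < t0" "t0 \<le> 1/2" using c M0 unfolding t0_def by (auto simp: min_def)
  have "g t0 \<le> t0 ^ n * M" unfolding g_def using t0 up[of t0] by (intro mult_left_mono) auto
  also have "\<dots> \<le> t0 * M"
  proof -
    have "t0 ^ n \<le> t0 ^ 1" using t0 n by (intro power_decreasing) auto
    then show ?thesis using M0 by (intro mult_right_mono) auto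
  qed
  also have "\<dots> \<le> c / (M + 1) * M" using M0 by (intro mult_right_mono) (auto simp: t0_def)
  also have "\<dots> < c" using c M0 by (simp add: field_simps)
  finally have gt0: "g t0 < c" .
  obtain X where X: "\<And>x. x \<ge> X \<Longrightarrow> x ^ n / exp x < c / (2 ^ n * (M + 1))"
  proof -
    have "0 < c / (2 ^ n * (M + 1))" using c M0 by simp
    then have "eventually (\<lambda>x. x ^ n / exp x < c / (2 ^ n * (M + 1))) at_top"
      by (rule order_tendstoD(2)[OF tendsto_power_div_exp_0])
    then show ?thesis using that unfolding eventually_at_top_linorder by blast
  qed
  define t1 where "t1 = max 2 (sqrt (2 * \<bar>X\<bar>))"
  have t1: "1 \<le> t1" "2 \<le> t1" by (auto simp: t1_def)
  define x where "x = t1\<^sup>2 / 2"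
  have xX: "X \<le> x"
  proof -
    have "sqrt (2 * \<bar>X\<bar>) \<le> t1" by (simp add: t1_def)
    then have "(sqrt (2 * \<bar>X\<bar>))\<^sup>2 \<le> t1\<^sup>2" by (intro power_mono) auto
    then have "2 * \<bar>X\<bar> \<le> t1\<^sup>2" by simp
    then show ?thesis unfolding x_def by linarith
  qed
  have x0: "0 < x" using t1 by (simp add: x_def)
  have "t1 ^ n \<le> (t1\<^sup>2) ^ n" using t1 by (intro power_mono) (auto simp: power2_eq_square)
  also have "\<dots> = 2 ^ n * x ^ n" by (simp add: x_def power_divide)
  finally have t1n: "t1 ^ n \<le> 2 ^ n * x ^ n" .
  have "g t1 \<le> t1 ^ n * (exp (- t1\<^sup>2 / 2) * M)" unfolding g_def using t1 up2[of t1] by (intro mult_left_mono) auto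
  also have "\<dots> = t1 ^ n / exp x * M" by (simp add: x_def exp_minus field_simps)
  also have "\<dots> \<le> 2 ^ n * x ^ n / exp x * M" using t1n M0 by (intro mult_right_mono divide_right_mono) auto
  also have "\<dots> = 2 ^ n * M * (x ^ n / exp x)" by simp
  also have "\<dots> \<le> 2 ^ n * M * (c / (2 ^ n * (M + 1)))"
    using X[OF xX] M0 by (intro mult_left_mono less_imp_le) auto
  also have "\<dots> = c * (M / (M + 1))"
  proof -
    have "(2::real) ^ n \<noteq> 0" by simp
    moreover have "M + 1 \<noteq> 0" using M0 by simp
    ultimately show ?thesis by (simp add: divide_simps)
  qed
  also have "\<dots> < c"
  proof -
    have "M / (M + 1) < 1" using M0 by simp
    then show ?thesis using c by (metis mult.right_neutral mult_strict_left_mono)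
  qed
  finally have gt1: "g t1 < c" .
  obtain a where a: "t0 \<le> a" "a \<le> 1" "g a = c"
    using IVT'[of g t0 c 1] gt0 c t0 gc[of t0 1] by auto
  obtain b where b: "1 \<le> b" "b \<le> t1" "g b = c"
    using IVT2'[of g t1 c 1] gt1 c t1 gc[of 1 t1] by auto
  have "a \<noteq> 1" "b \<noteq> 1" using a b c by auto
  then have "0 < a" "a < b" using a b t0 by auto
  moreover have "a ^ n * G a = b ^ n * G b" using a(3) b(3) unfolding g_def by simp
  ultimately show ?thesis by blast
qed

context cs begin

definition mu where "mu = measure HS (F 1)"

lemma F1_em: "emeasure HS (F 1) = ennreal mu"
  using F1_fin by (simp add: mu_def emeasure_eq_ennreal_measure)

lemma F1_lt: "emeasure HS (F 1) < \<infinity>" using F1_fin by (simp add: top.not_eq_extremum)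

lemma mu_nonneg: "0 \<le> mu" by (simp add: mu_def)

lemma ind_int: "integrable HS (indicator (F 1) :: 'a \<Rightarrow> real)"
  by (rule integrable_real_indicator[OF F_sets F1_lt])

lemma int_ind: "integral\<^sup>L HS (indicator (F 1) :: 'a \<Rightarrow> real) = mu"
  by (simp add: mu_def)

definition hh :: "real \<Rightarrow> 'a \<Rightarrow> real" where
  "hh t y = exp (- (t * norm y)\<^sup>2 / 2) * indicator (F 1) y"

lemma hh_borel: "hh t \<in> borel_measurable borel" unfolding hh_def by measurable

lemma hh_meas: "hh t \<in> borel_measurable HS" by (rule borel_meas_HM[OF hh_borel])

lemma hh_bound: "\<bar>hh t y\<bar> \<le> indicator (F 1) y"
  by (simp add: hh_def indicator_def)

lemma hh_nonneg: "0 \<le> hh t y" by (simp add: hh_def)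

lemma hh_int: "integrable HS (hh t)"
  by (rule Bochner_Integration.integrable_bound[OF ind_int hh_meas]) (auto simp: hh_bound)

definition Gr where "Gr t = integral\<^sup>L HS (hh t)"

definition c0 :: real where "c0 = (2 * pi) powr (- real DIM('a) / 2)"

lemma c0_pos: "0 < c0" by (simp add: c0_def)

lemma B_Gr: "B t = ennreal (c0 * Gr t)"
proof -
  have eq: "ennreal (phi (t *\<^sub>R y)) * indicator (F 1) y = ennreal (c0 * hh t y)" for y
    by (simp add: phi_def hh_def c0_def indicator_def power_mult_distrib)
  have "B t = (\<integral>\<^sup>+ y. ennreal (c0 * hh t y) \<partial>HS)" unfolding B_def eq ..
  also have "\<dots> = ennreal (integral\<^sup>L HS (\<lambda>y. c0 * hh t y))"
    by (rule nn_integral_eq_integral) (use hh_int hh_nonneg c0_pos in auto)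
  also have "\<dots> = ennreal (c0 * Gr t)" by (simp add: Gr_def)
  finally show ?thesis .
qed

lemma Gr_nonneg: "0 \<le> Gr t" unfolding Gr_def by (rule integral_nonneg_AE) (simp add: hh_nonneg)

lemma Gr_le: "Gr t \<le> mu"
proof -
  have "Gr t \<le> integral\<^sup>L HS (indicator (F 1) :: 'a \<Rightarrow> real)"
    unfolding Gr_def by (rule integral_mono[OF hh_int ind_int]) (use hh_bound in \<open>auto simp: abs_le_iff\<close>)
  then show ?thesis by (simp only: int_ind)
qed

lemma Gr_le_exp: assumes t: "0 \<le> t" shows "Gr t \<le> exp (- t\<^sup>2 / 2) * mu"
proof -
  have "Gr t \<le> integral\<^sup>L HS (\<lambda>y. exp (- t\<^sup>2 / 2) * (indicator (F 1) y :: real))"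
    unfolding Gr_def
  proof (rule integral_mono[OF hh_int])
    show "integrable HS (\<lambda>y. exp (- t\<^sup>2 / 2) * (indicator (F 1) y :: real))"
      using ind_int by simp
    fix y :: 'a
    show "hh t y \<le> exp (- t\<^sup>2 / 2) * indicator (F 1) y"
    proof (cases "y \<in> F 1")
      case True
      have "1 \<le> norm y" using F_norm_ge[OF True] .
      then have "t \<le> t * norm y" using t by (simp add: mult_le_cancel_left1)
      then have "t\<^sup>2 \<le> (t * norm y)\<^sup>2" using t by (intro power_mono) auto
      then show ?thesis using True by (simp add: hh_def)
    qed (simp add: hh_def)
  qed
  also have "\<dots> = exp (- t\<^sup>2 / 2) * mu" by (simp only: integral_mult_right_zero int_ind)
  finally show ?thesis .
qed

lemma Gr_pos: assumes "0 < mu" shows "0 < Gr 1"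
proof -
  define R where "R = 1 / e0"
  have "integral\<^sup>L HS (\<lambda>y. exp (- R\<^sup>2 / 2) * (indicator (F 1) y :: real)) \<le> Gr 1"
    unfolding Gr_def
  proof (rule integral_mono[OF _ hh_int])
    show "integrable HS (\<lambda>y. exp (- R\<^sup>2 / 2) * (indicator (F 1) y :: real))" using ind_int by simp
    fix y :: 'a
    show "exp (- R\<^sup>2 / 2) * indicator (F 1) y \<le> hh 1 y"
    proof (cases "y \<in> F 1")
      case True
      have "e0 * norm y \<le> 1" using F_norm_le[OF True] .
      then have "norm y \<le> R" using e0(1) by (simp add: R_def field_simps)
      then have "(norm y)\<^sup>2 \<le> R\<^sup>2" by (intro power_mono) auto
      then show ?thesis using True by (simp add: hh_def)
    qed (simp add: hh_def)
  qed
  moreover have "integral\<^sup>L HS (\<lambda>y. exp (- R\<^sup>2 / 2) * (indicator (F 1) y :: real)) = exp (- R\<^sup>2 / 2) * mu"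
    by (simp only: integral_mult_right_zero int_ind)
  moreover have "0 < exp (- R\<^sup>2 / 2) * mu" using assms by simp
  ultimately show ?thesis by linarith
qed

lemma Gr_lip:
  assumes "0 \<le> T" "t1 \<in> {0..T}" "t2 \<in> {0..T}"
  shows "\<bar>Gr t1 - Gr t2\<bar> \<le> (T * (1 / e0)\<^sup>2 * mu) * \<bar>t1 - t2\<bar>"
proof -
  define R where "R = 1 / e0"
  define L where "L = T * R\<^sup>2 * \<bar>t1 - t2\<bar>"
  have pt: "\<bar>hh t1 y - hh t2 y\<bar> \<le> L * indicator (F 1) y" for y
  proof (cases "y \<in> F 1")
    case True
    have ny: "norm y \<le> R" using F_norm_le[OF True] e0(1) by (simp add: R_def field_simps)
    have "\<bar>hh t1 y - hh t2 y\<bar> = \<bar>exp (- (t1 * norm y)\<^sup>2 / 2) - exp (- (t2 * norm y)\<^sup>2 / 2)\<bar>"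
      using True by (simp add: hh_def)
    also have "\<dots> \<le> \<bar>- (t1 * norm y)\<^sup>2 / 2 - - (t2 * norm y)\<^sup>2 / 2\<bar>" by (rule exp_lip) auto
    also have "\<dots> = (norm y)\<^sup>2 * \<bar>t1 - t2\<bar> * (t1 + t2) / 2"
    proof -
      have e1: "- (t1 * norm y)\<^sup>2 / 2 - - (t2 * norm y)\<^sup>2 / 2 = ((norm y)\<^sup>2 * (t1 + t2) / 2) * (t2 - t1)"
        by (simp add: power2_eq_square field_simps)
      have nn: "0 \<le> (norm y)\<^sup>2 * (t1 + t2) / 2" using assms by auto
      show ?thesis unfolding e1 abs_mult abs_of_nonneg[OF nn] by (simp add: abs_minus_commute)
    qed
    also have "\<dots> \<le> R\<^sup>2 * \<bar>t1 - t2\<bar> * (2 * T) / 2"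
      using assms ny by (intro divide_right_mono mult_mono power_mono) auto
    also have "\<dots> = L * indicator (F 1) y" using True by (simp add: L_def)
    finally show ?thesis .
  qed (simp add: hh_def)
  have "\<bar>Gr t1 - Gr t2\<bar> = \<bar>integral\<^sup>L HS (\<lambda>y. hh t1 y - hh t2 y)\<bar>"
    unfolding Gr_def Bochner_Integration.integral_diff[OF hh_int hh_int] by (rule refl)
  also have "\<dots> \<le> integral\<^sup>L HS (\<lambda>y. \<bar>hh t1 y - hh t2 y\<bar>)"
    using integral_norm_bound[of HS "\<lambda>y. hh t1 y - hh t2 y"] by simp
  also have "\<dots> \<le> integral\<^sup>L HS (\<lambda>y. L * (indicator (F 1) y :: real))"
  proof (rule integral_mono)
    show "integrable HS (\<lambda>y. \<bar>hh t1 y - hh t2 y\<bar>)" by (intro integrable_abs Bochner_Integration.integrable_diff hh_int)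
    show "integrable HS (\<lambda>y. L * (indicator (F 1) y :: real))" using ind_int by simp
  qed (rule pt)
  also have "\<dots> = L * mu" by (simp only: integral_mult_right_zero int_ind)
  finally show ?thesis by (simp add: L_def R_def algebra_simps)
qed

lemma Gr_cont: "continuous_on {0..T} Gr"
proof (cases "0 \<le> T")
  case True
  have "(T * (1 / e0)\<^sup>2 * mu)-lipschitz_on {0..T} Gr"
    by (rule lipschitz_onI) (use Gr_lip[OF True] True mu_nonneg in \<open>auto simp: dist_real_def\<close>)
  then show ?thesis by (rule lipschitz_on_continuous_on)
next
  case False then show ?thesis by simp
qed

lemma gcm_real:
  assumes t: "t > 0" and eta: "\<eta> \<in> sets borel" "\<eta> \<subseteq> Omega C"
  shows "gauss_cone_measure C (K t) \<eta> = (if u0 \<in> \<eta> then ennreal (c0 * (t ^ DIM('a) * Gr t)) else 0)"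
proof -
  have "ennreal t * A t = ennreal t * (ennreal (t ^ (DIM('a) - 1)) * ennreal (c0 * Gr t))"
    by (simp add: A_scale[OF t] B_Gr)
  also have "\<dots> = ennreal (t * (t ^ (DIM('a) - 1) * (c0 * Gr t)))"
    using t c0_pos Gr_nonneg by (simp add: ennreal_mult)
  also have "t * (t ^ (DIM('a) - 1) * (c0 * Gr t)) = c0 * (t ^ DIM('a) * Gr t)"
  proof -
    have "t * t ^ (DIM('a) - 1) = t ^ DIM('a)" using DIM_positive[where 'a='a]
      by (metis Suc_diff_1 power_Suc)
    then show ?thesis by (simp add: algebra_simps)
  qed
  finally show ?thesis using gcm_formula[OF t eta] by simp
qed

lemma main_exists:
  "\<exists>a b. 0 < a \<and> a < b \<and> (\<forall>\<eta>. \<eta> \<in> sets borel \<and> \<eta> \<subseteq> Omega C \<longrightarrow>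
      gauss_cone_measure C (K a) \<eta> = gauss_cone_measure C (K b) \<eta>)"
proof -
  have "\<exists>a b. 0 < a \<and> a < b \<and> a ^ DIM('a) * Gr a = b ^ DIM('a) * Gr b"
  proof (cases "mu = 0")
    case True
    then have "Gr t = 0" for t using Gr_le[of t] Gr_nonneg[of t] by simp
    then show ?thesis by (intro exI[of _ 1] exI[of _ 2]) simp
  next
    case False
    then have "0 < mu" using mu_nonneg by simp
    show ?thesis
      by (rule ivt_pair[OF Gr_cont _ Gr_le_exp Gr_pos[OF \<open>0 < mu\<close>]])
         (use Gr_le DIM_positive[where 'a='a] in \<open>auto simp: Suc_le_eq\<close>)
  qed
  then obtain a b where ab: "0 < a" "a < b" "a ^ DIM('a) * Gr a = b ^ DIM('a) * Gr b" by blast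
  have "gauss_cone_measure C (K a) \<eta> = gauss_cone_measure C (K b) \<eta>"
    if "\<eta> \<in> sets borel" "\<eta> \<subseteq> Omega C" for \<eta>
    using gcm_real[OF ab(1) that] gcm_real[of b, OF _ that] ab by simp
  then show ?thesis using ab by blast
qed

end

theorem theorem7p4:
  fixes C \<omega> :: "'a::euclidean_space set"
  assumes "closed C" and "convex C" and "cone C"
    and "pointed_cone C"
    and "interior C \<noteq> {}"
    and "\<omega> \<noteq> {}" and "compact \<omega>" and "\<omega> \<subseteq> Omega C"
  shows "\<exists>K L. K \<in> K_C_omega C \<omega> \<and> L \<in> K_C_omega C \<omega> \<and>
           (\<forall>\<eta>. \<eta> \<in> sets borel \<and> \<eta> \<subseteq> Omega C \<longrightarrow>
                gauss_cone_measure C K \<eta> = gauss_cone_measure C L \<eta>) \<and>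
           K \<noteq> L"
  proof -
  obtain u0 where u0w: "u0 \<in> \<omega>" using assms(6) by blast
  then have u0O: "u0 \<in> Omega C" using assms(8) by blast
  interpret cs C u0
    by unfold_locales (use assms(1,2,3,5) u0O in auto)
  obtain a b where ab: "0 < a" "a < b"
    "\<forall>\<eta>. \<eta> \<in> sets borel \<and> \<eta> \<subseteq> Omega C \<longrightarrow>
        gauss_cone_measure C (K a) \<eta> = gauss_cone_measure C (K b) \<eta>"
    using main_exists by blast
  have "K a \<in> K_C_omega C \<omega>" by (rule K_in[OF ab(1) u0w assms(8)])
  moreover have "K b \<in> K_C_omega C \<omega>" using ab by (intro K_in[OF _ u0w assms(8)]) auto
  moreover have "K a \<noteq> K b" by (rule K_neq[OF ab(1,2)])
  ultimately show ?thesis using ab(3) by blast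
qed

end
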